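(* Let $A>0$. There exists a constant $R_A$ depending only on $A$ such that for every Sawtooth model with $n\ge2$ upper particles (so at least four particles) with $\int_0^1f_1=\int_0^1g_1=1$ and $\max(\|f_1\|_\infty,\|g_1\|_\infty)\le A$, and every event $\mathcal X$ of positive probability in the $\sigma$-algebra generated by $\{X_{i+1},Y_i\}_{i\ge2}$ (as well as for conditioning on $Y_2=y_2$, $y_2\in(0,1]$), the conditional density $d_{X_I\mid\mathcal X}$ is differentiable with $\|(d_{X_I\mid\mathcal X})'\|_\infty\le R_A$.
   Context: A (type $--$) Sawtooth model with $n\ge1$ upper particles is specified by functions $f_1,g_1,\dots,f_n,g_n:[0,1]\to[0,\infty)$, each nondecreasing, $C^1$ and not identically zero. It is the probability space $[0,1]^{n+1}\times[0,1]^n$ with probability density at $(x_1,\dots,x_{n+1},y_1,\dots,y_n)$ equal to $\frac{1}{\mathcal V}\prod_{i=1}^n\mathbf 1_{\{x_i\le y_i\}}\mathbf 1_{\{x_{i+1}\le y_i\}}f_i(y_i-x_i)\,g_i(y_i-x_{i+1})$, $\mathcal V$ being the normalizing constant; lower particles $X_1,\dots,X_{n+1}$, upper particles $Y_1,\dots,Y_n$, $X_I:=X_1$. Conditional densities are computed from the joint density. *)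

theory Defs
  imports "HOL-Analysis.Analysis"
begin

text \<open>Sawtooth model (type --) with n upper particles.
  Lower particles x 1, ..., x (n+1), upper particles y 1, ..., y n.
  Configurations are pairs (x, y) of extensional functions.\<close>

definition C1_on01 :: "(real \<Rightarrow> real) \<Rightarrow> bool" where
  "C1_on01 h \<longleftrightarrow> (\<exists>h'. continuous_on {0..1} h' \<and>
      (\<forall>t\<in>{0..1}. (h has_real_derivative h' t) (at t within {0..1})))"

definition sawtooth_admissible ::
  "nat \<Rightarrow> (nat \<Rightarrow> real \<Rightarrow> real) \<Rightarrow> (nat \<Rightarrow> real \<Rightarrow> real) \<Rightarrow> bool" where
  "sawtooth_admissible n f g \<longleftrightarrow> n \<ge> 1 \<and>
     (\<forall>i\<in>{1..n}. mono_on {0..1} (f i) \<and> mono_on {0..1} (g i)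
        \<and> (\<forall>t\<in>{0..1}. f i t \<ge> 0 \<and> g i t \<ge> 0)
        \<and> C1_on01 (f i) \<and> C1_on01 (g i)
        \<and> (\<exists>t\<in>{0..1}. f i t \<noteq> 0) \<and> (\<exists>t\<in>{0..1}. g i t \<noteq> 0))"

definition saw_weight ::
  "nat \<Rightarrow> (nat \<Rightarrow> real \<Rightarrow> real) \<Rightarrow> (nat \<Rightarrow> real \<Rightarrow> real) \<Rightarrow>
   (nat \<Rightarrow> real) \<Rightarrow> (nat \<Rightarrow> real) \<Rightarrow> real" where
  "saw_weight n f g x y =
     (\<Prod>i\<in>{1..n+1}. indicator {0..1} (x i)) *
     (\<Prod>i\<in>{1..n}. indicator {0..1} (y i)
        * (if x i \<le> y i then 1 else 0) * (if x (Suc i) \<le> y i then 1 else 0)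
        * f i (y i - x i) * g i (y i - x (Suc i)))"

definition saw_base :: "nat \<Rightarrow> ((nat \<Rightarrow> real) \<times> (nat \<Rightarrow> real)) measure" where
  "saw_base n = pair_measure (PiM {1..n+1} (\<lambda>_. lborel)) (PiM {1..n} (\<lambda>_. lborel))"

definition saw_normalizer ::
  "nat \<Rightarrow> (nat \<Rightarrow> real \<Rightarrow> real) \<Rightarrow> (nat \<Rightarrow> real \<Rightarrow> real) \<Rightarrow> real" where
  "saw_normalizer n f g = (LINT z|saw_base n. saw_weight n f g (fst z) (snd z))"

definition saw_prob ::
  "nat \<Rightarrow> (nat \<Rightarrow> real \<Rightarrow> real) \<Rightarrow> (nat \<Rightarrow> real \<Rightarrow> real) \<Rightarrow>
   ((nat \<Rightarrow> real) \<times> (nat \<Rightarrow> real)) measure" where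
  "saw_prob n f g = density (saw_base n)
     (\<lambda>z. ennreal (saw_weight n f g (fst z) (snd z) / saw_normalizer n f g))"

text \<open>The random vector (X_3,...,X_{n+1}, Y_2,...,Y_n), i.e. {X_{i+1}, Y_i}_{i>=2}.\<close>
definition saw_rest :: "nat \<Rightarrow> (nat \<Rightarrow> real) \<times> (nat \<Rightarrow> real) \<Rightarrow>
    (nat \<Rightarrow> real) \<times> (nat \<Rightarrow> real)" where
  "saw_rest n z = (restrict (fst z) {3..n+1}, restrict (snd z) {2..n})"

definition saw_rest_space :: "nat \<Rightarrow> ((nat \<Rightarrow> real) \<times> (nat \<Rightarrow> real)) measure" where
  "saw_rest_space n = pair_measure (PiM {3..n+1} (\<lambda>_. lborel)) (PiM {2..n} (\<lambda>_. lborel))"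

text \<open>The event {(X_3,..,X_{n+1},Y_2,..,Y_n) in B}; these are exactly the events of the
  sigma-algebra generated by {X_{i+1}, Y_i}_{i>=2}.\<close>
definition saw_event :: "nat \<Rightarrow> ((nat \<Rightarrow> real) \<times> (nat \<Rightarrow> real)) set \<Rightarrow>
    ((nat \<Rightarrow> real) \<times> (nat \<Rightarrow> real)) set" where
  "saw_event n B = {z \<in> space (saw_base n). saw_rest n z \<in> B}"

text \<open>Conditional density of X_1 given an event E, computed from the joint density:
  integrate the joint density times the indicator of E over all coordinates except x 1,
  and divide by the integral over all coordinates (the normaliser cancels).\<close>
definition cond_dens_X1 ::
  "nat \<Rightarrow> (nat \<Rightarrow> real \<Rightarrow> real) \<Rightarrow> (nat \<Rightarrow> real \<Rightarrow> real) \<Rightarrow>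
   ((nat \<Rightarrow> real) \<times> (nat \<Rightarrow> real)) set \<Rightarrow> real \<Rightarrow> real" where
  "cond_dens_X1 n f g E t =
     (LINT z|pair_measure (PiM {2..n+1} (\<lambda>_. lborel)) (PiM {1..n} (\<lambda>_. lborel)).
        saw_weight n f g ((fst z)(1 := t)) (snd z) * indicator E ((fst z)(1 := t), snd z))
     / (LINT z|saw_base n. saw_weight n f g (fst z) (snd z) * indicator E z)"

definition cond_dens_X1_Y2 ::
  "nat \<Rightarrow> (nat \<Rightarrow> real \<Rightarrow> real) \<Rightarrow> (nat \<Rightarrow> real \<Rightarrow> real) \<Rightarrow> real \<Rightarrow> real \<Rightarrow> real" where
  "cond_dens_X1_Y2 n f g s t =
     (LINT z|pair_measure (PiM {2..n+1} (\<lambda>_. lborel)) (PiM ({1..n} - {2}) (\<lambda>_. lborel)).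
        saw_weight n f g ((fst z)(1 := t)) ((snd z)(2 := s)))
     / (LINT z|pair_measure (PiM {1..n+1} (\<lambda>_. lborel)) (PiM ({1..n} - {2}) (\<lambda>_. lborel)).
        saw_weight n f g (fst z) ((snd z)(2 := s)))"

end

theory Submission
  imports Defs
begin

definition clampf :: "(real \<Rightarrow> real) \<Rightarrow> real \<Rightarrow> real" where
  "clampf h u = h (max 0 (min 1 u))"

lemma C1_on01_cont: "C1_on01 h \<Longrightarrow> continuous_on {0..1} h"
  unfolding C1_on01_def
  by (metis DERIV_continuous continuous_on_eq_continuous_within)

lemma clampf_cont: assumes "continuous_on {0..1} h" shows "continuous_on UNIV (clampf h)"
proof -
  have "continuous_on UNIV (\<lambda>u::real. max 0 (min 1 u))" by (intro continuous_intros)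
  moreover have "(\<lambda>u::real. max 0 (min 1 u)) ` UNIV \<subseteq> {0..1}" by auto
  ultimately show ?thesis unfolding clampf_def
    using continuous_on_compose2[OF assms] by blast
qed

lemma clampf_eq[simp]: "u \<in> {0..1} \<Longrightarrow> clampf h u = h u"
  by (simp add: clampf_def)

lemma clampf_meas: "continuous_on {0..1} h \<Longrightarrow> clampf h \<in> borel_measurable borel"
  using clampf_cont borel_measurable_continuous_onI by blast

lemma clampf_mono: assumes "mono_on {0..1} h" shows "mono (clampf h)"
  unfolding clampf_def mono_def using assms unfolding mono_on_def by auto

lemma clampf_nonneg: assumes "\<forall>t\<in>{0..1}. h t \<ge> 0" shows "clampf h u \<ge> 0"
  unfolding clampf_def using assms by auto

lemma clampf_bound: assumes "\<forall>t\<in>{0..1}. \<bar>h t\<bar> \<le> A" shows "\<bar>clampf h u\<bar> \<le> A"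
  unfolding clampf_def using assms by auto

lemma mono_deriv_nonneg:
  assumes m: "mono_on {0..1} h" and d: "(h has_real_derivative D) (at t within {0..1})"
    and t: "t \<in> {0..1}"
  shows "D \<ge> 0"
proof -
  have lim: "((\<lambda>y. (h y - h t) / (y - t)) \<longlongrightarrow> D) (at t within {0..1})"
    using d by (simp add: has_field_derivative_iff)
  have nb: "at t within {0..1::real} \<noteq> bot"
    using t by (auto simp: trivial_limit_within islimpt_Icc)
  have "\<forall>\<^sub>F y in at t within {0..1}. 0 \<le> (h y - h t) / (y - t)"
    unfolding eventually_at_filter
  proof (rule always_eventually, intro allI impI)
    fix y assume "y \<noteq> t" "y \<in> {0..1::real}"
    then show "0 \<le> (h y - h t) / (y - t)"
      using m t unfolding mono_on_def
      by (cases "y < t") (auto simp: divide_nonneg_nonneg divide_nonpos_neg zero_le_divide_iff)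
  qed
  from tendsto_lowerbound[OF lim this nb] show ?thesis .
qed


definition extf :: "(real \<Rightarrow> real) \<Rightarrow> (real \<Rightarrow> real) \<Rightarrow> real \<Rightarrow> real" where
  "extf h h' u = (if u < 0 then h 0 + h' 0 * u else h u)"
definition extd :: "(real \<Rightarrow> real) \<Rightarrow> real \<Rightarrow> real" where
  "extd h' u = (if u < 0 then h' 0 else h' u)"

lemma extf_deriv:
  assumes hd: "\<forall>t\<in>{0..1}. (h has_real_derivative h' t) (at t within {0..1})"
    and u: "u \<in> {-1..1}"
  shows "(extf h h' has_real_derivative extd h' u) (at u within {-1..1})"
proof -
  let ?q = "\<lambda>y. (extf h h' y - extf h h' u) / (y - u)"
  have A: "(?q \<longlongrightarrow> extd h' u) (at u within {0..1})"
  proof (cases "u < 0")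
    case True
    then have "\<not> u islimpt {0..1::real}" by (auto simp: islimpt_Icc)
    then have "at u within {0..1} = bot" by (simp add: trivial_limit_within)
    then show ?thesis by simp
  next
    case False
    then have u01: "u \<in> {0..1}" using u by auto
    have "((\<lambda>y. (h y - h u) / (y - u)) \<longlongrightarrow> h' u) (at u within {0..1})"
      using hd u01 by (simp add: has_field_derivative_iff)
    note L = this
    have "extd h' u = h' u" using False by (simp add: extd_def)
    then show ?thesis
      using False by (auto intro!: Lim_transform_within[OF L, where d=1] simp: extf_def)
  qed
  have B: "(?q \<longlongrightarrow> extd h' u) (at u within {-1..0})"
  proof (cases "u > 0")
    case True
    then have "\<not> u islimpt {-1..0::real}" by (auto simp: islimpt_Icc)
    then have "at u within {-1..0} = bot" by (simp add: trivial_limit_within)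
    then show ?thesis by simp
  next
    case False
    have e: "extf h h' y = h 0 + h' 0 * y" if "y \<le> 0" for y
      using that by (auto simp: extf_def)
    have L: "((\<lambda>y. h' 0) \<longlongrightarrow> extd h' u) (at u within {-1..0})"
      using False by (auto simp: extd_def)
    show ?thesis
      using False by (auto intro!: Lim_transform_within[OF L, where d=1] simp: e field_simps)
  qed
  have "{-1..1::real} = {-1..0} \<union> {0..1}" by auto
  then show ?thesis using A B
    by (simp add: has_field_derivative_iff Lim_within_Un)
qed

lemma extd_cont: "continuous_on {0..1} h' \<Longrightarrow> continuous_on {-1..1} (extd h')"
proof -
  assume c: "continuous_on {0..1} h'"
  have "continuous_on {-1..1} (\<lambda>u. h' (max 0 u))"
    by (rule continuous_on_compose2[OF c]) (auto intro!: continuous_intros)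
  moreover have "\<And>u. u \<in> {-1..1} \<Longrightarrow> h' (max 0 u) = extd h' u"
    by (auto simp: extd_def max_def)
  ultimately show ?thesis using continuous_on_cong by (metis (no_types, lifting))
qed

lemma extf_eq: "u \<ge> 0 \<Longrightarrow> extf h h' u = h u" by (simp add: extf_def)
lemma extd_eq: "u \<ge> 0 \<Longrightarrow> extd h' u = h' u" by (simp add: extd_def)

lemma extf_comp_deriv:
  assumes hd: "\<forall>t\<in>{0..1}. (h has_real_derivative h' t) (at t within {0..1})"
    and y: "y \<in> {0..1}" and a: "a \<in> {0..1}"
  shows "((\<lambda>a. extf h h' (y - a)) has_real_derivative - extd h' (y - a)) (at a within {0..1})"
proof -
  have g: "((\<lambda>a. y - a) has_real_derivative -1) (at a within {0..1})"
    by (auto intro!: derivative_eq_intros)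
  have im: "(\<lambda>a. y - a) ` {0..1} \<subseteq> {-1..1}" using y by auto
  have "(extf h h' has_real_derivative extd h' (y - a)) (at (y - a) within {-1..1})"
    using extf_deriv[OF hd] y a by auto
  then have "(extf h h' has_real_derivative extd h' (y - a)) (at (y - a) within (\<lambda>a. y - a) ` {0..1})"
    using DERIV_subset im by blast
  from DERIV_image_chain[OF this g] show ?thesis by (simp add: o_def)
qed


definition Kf :: "(real \<Rightarrow> real) \<Rightarrow> (real \<Rightarrow> real) \<Rightarrow> real \<Rightarrow> real \<Rightarrow> real \<Rightarrow> real" where
  "Kf f g t a b = indicator {0..1} t * indicator {0..1} a * indicator {0..1} b
     * (if t \<le> b then 1 else 0) * (if a \<le> b then 1 else 0) * f (b - t) * g (b - a)"

definition NumE :: "(real \<Rightarrow> real) \<Rightarrow> (real \<Rightarrow> real) \<Rightarrow> (real \<Rightarrow> real) \<Rightarrow> real \<Rightarrow> ennreal" where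
  "NumE f g S t = (\<integral>\<^sup>+ a. ennreal (S a) * (\<integral>\<^sup>+ b. ennreal (Kf f g t a b) \<partial>lborel) \<partial>lborel)"

lemma Kf_clamp: "Kf f g t a b = Kf (clampf f) (clampf g) t a b"
  by (auto simp: Kf_def indicator_def)

locale coreC =
  fixes f g f' g' S :: "real \<Rightarrow> real" and A C :: real
  assumes fmono: "mono_on {0..1} f" and gmono: "mono_on {0..1} g"
    and fnn: "\<forall>t\<in>{0..1}. f t \<ge> 0" and gnn: "\<forall>t\<in>{0..1}. g t \<ge> 0"
    and fd: "\<forall>t\<in>{0..1}. (f has_real_derivative f' t) (at t within {0..1})"
    and gd: "\<forall>t\<in>{0..1}. (g has_real_derivative g' t) (at t within {0..1})"
    and f'c: "continuous_on {0..1} f'" and g'c: "continuous_on {0..1} g'"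
    and fint: "integral {0..1} f = 1" and gint: "integral {0..1} g = 1"
    and fA: "\<forall>t\<in>{0..1}. \<bar>f t\<bar> \<le> A" and gA: "\<forall>t\<in>{0..1}. \<bar>g t\<bar> \<le> A"
    and Smeas: "S \<in> borel_measurable borel"
    and Snn: "\<And>x. 0 \<le> S x" and SC: "\<And>x. S x \<le> C"
    and Santi: "\<And>a b. a \<le> b \<Longrightarrow> S b \<le> S a"
begin

lemma fcont: "continuous_on {0..1} f"
  using fd by (metis DERIV_continuous continuous_on_eq_continuous_within)
lemma gcont: "continuous_on {0..1} g"
  using gd by (metis DERIV_continuous continuous_on_eq_continuous_within)

abbreviation "fc \<equiv> clampf f"
abbreviation "gc \<equiv> clampf g"

lemma fc_cont: "continuous_on UNIV fc" using clampf_cont[OF fcont] .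
lemma gc_cont: "continuous_on UNIV gc" using clampf_cont[OF gcont] .
lemma fc_nn: "0 \<le> fc u" using clampf_nonneg[OF fnn] .
lemma gc_nn: "0 \<le> gc u" using clampf_nonneg[OF gnn] .
lemma fc_A: "fc u \<le> A" using clampf_bound[OF fA, of u] by simp
lemma gc_A: "gc u \<le> A" using clampf_bound[OF gA, of u] by simp
lemma fc_mono: "u \<le> v \<Longrightarrow> fc u \<le> fc v" using clampf_mono[OF fmono] unfolding mono_def by blast
lemma gc_mono: "u \<le> v \<Longrightarrow> gc u \<le> gc v" using clampf_mono[OF gmono] unfolding mono_def by blast

lemma A_ge1: "A \<ge> 1"
proof -
  have "integral {0..1} f \<le> integral {0..1} (\<lambda>_::real. A)"
  proof (rule integral_le)
    show "f integrable_on {0..1}" by (rule integrable_continuous_real[OF fcont])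
    show "(\<lambda>_. A) integrable_on {0..1::real}" by (rule integrable_continuous_real[OF continuous_on_const])
  qed (use fA in \<open>force simp: abs_le_iff\<close>)
  then show ?thesis using fint by simp
qed

lemma f'_nn: "t \<in> {0..1} \<Longrightarrow> 0 \<le> f' t"
  using mono_deriv_nonneg[OF fmono] fd by blast

lemma S_int: "S integrable_on {a..b}"
proof -
  have "mono_on {a..b} (\<lambda>x. - S x)" unfolding mono_on_def using Santi by auto
  from integrable_on_mono_on[OF this] have "(\<lambda>x. - S x) integrable_on {a..b}" .
  then show ?thesis using integrable_neg by fastforce
qed

lemma gS_int: "(\<lambda>x. gc (c - x) * S x) integrable_on {a..b}"
proof -
  have meas: "(\<lambda>x. gc (c - x) * S x) \<in> borel_measurable borel"
    using clampf_meas[OF gcont] Smeas by measurable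
  have "integrable lborel (\<lambda>x. indicator {a..b} x *\<^sub>R (gc (c - x) * S x))"
  proof (rule integrableI_bounded_set_indicator[where B="A * C"])
    show "(\<lambda>x. gc (c - x) * S x) \<in> borel_measurable lborel" using meas by simp
    show "AE x in lborel. x \<in> {a..b} \<longrightarrow> norm (gc (c - x) * S x) \<le> A * C"
    proof (intro AE_I2 impI)
      fix x
      have "\<bar>gc (c - x) * S x\<bar> = gc (c - x) * S x" using gc_nn Snn by (simp add: abs_mult)
      also have "\<dots> \<le> A * C" using gc_nn gc_A Snn SC A_ge1 by (intro mult_mono) auto
      finally show "norm (gc (c - x) * S x) \<le> A * C" by simp
    qed
  qed (auto simp: emeasure_lborel_Icc_eq)
  then have "set_integrable lborel {a..b} (\<lambda>x. gc (c - x) * S x)"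
    by (simp add: set_integrable_def)
  from set_borel_integral_eq_integral(1)[OF this] show ?thesis .
qed

definition "H y = integral {0..y} (\<lambda>x. gc (y - x) * S x)"
definition "m = integral {0..1} S"

lemma m_nn: "0 \<le> m" unfolding m_def using S_int Snn by (intro integral_nonneg) auto

lemma H_nn: "0 \<le> H y" unfolding H_def using gS_int gc_nn Snn by (intro integral_nonneg) auto

lemma H_le: assumes "y \<in> {0..1}" shows "H y \<le> A * m"
proof -
  have "H y \<le> integral {0..y} (\<lambda>x. A * S x)" unfolding H_def
    using gS_int S_int gc_A Snn by (intro integral_le integrable_on_mult_right) (auto intro!: mult_right_mono)
  also have "\<dots> \<le> integral {0..1} (\<lambda>x. A * S x)"
    using assms S_int Snn A_ge1 by (intro integral_subset_le integrable_on_mult_right) auto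
  also have "\<dots> = A * m" unfolding m_def by simp
  finally show ?thesis .
qed

lemma C_nn: "0 \<le> C" using Snn[of 0] SC[of 0] by simp

lemma int_const_bound:
  fixes f0 :: "real \<Rightarrow> real"
  assumes "f0 integrable_on {a..b}" "a \<le> b" "\<And>x. x \<in> {a..b} \<Longrightarrow> \<bar>f0 x\<bar> \<le> B"
  shows "\<bar>integral {a..b} f0\<bar> \<le> (b - a) * B"
proof -
  have "norm (integral {a..b} f0) \<le> integral {a..b} (\<lambda>_::real. B)"
    by (rule integral_norm_bound_integral[OF assms(1) integrable_continuous_real[OF continuous_on_const]])
       (use assms(3) in auto)
  then show ?thesis using assms(2) by (simp add: mult.commute)
qed

lemma H_diff:
  assumes "0 \<le> u" "u \<le> v"
  shows "H v - H u = integral {0..u} (\<lambda>x. (gc (v - x) - gc (u - x)) * S x)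
                    + integral {u..v} (\<lambda>x. gc (v - x) * S x)"
proof -
  have "H v = integral {0..u} (\<lambda>x. gc (v - x) * S x) + integral {u..v} (\<lambda>x. gc (v - x) * S x)"
    unfolding H_def by (rule Henstock_Kurzweil_Integration.integral_combine[symmetric]) (use assms gS_int in auto)
  moreover have "integral {0..u} (\<lambda>x. (gc (v - x) - gc (u - x)) * S x)
      = integral {0..u} (\<lambda>x. gc (v - x) * S x) - integral {0..u} (\<lambda>x. gc (u - x) * S x)"
    by (subst integral_diff[symmetric]) (auto intro!: gS_int integral_cong simp: left_diff_distrib)
  ultimately show ?thesis unfolding H_def by simp
qed

lemma H_cont: "continuous_on {0..1} H"
proof (unfold continuous_on_iff, intro ballI allI impI)
  fix y e :: real assume y: "y \<in> {0..1}" and e: "0 < e"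
  define e1 where "e1 = e / (2 * (C + 1))"
  have e1: "0 < e1" using e C_nn by (simp add: e1_def)
  have "uniformly_continuous_on {-1..1} gc"
    by (rule compact_uniformly_continuous[OF continuous_on_subset[OF gc_cont] compact_Icc]) auto
  then obtain d1 where d1: "d1 > 0"
    and d1': "\<And>x x'. x \<in> {-1..1} \<Longrightarrow> x' \<in> {-1..1} \<Longrightarrow> dist x' x < d1 \<Longrightarrow> dist (gc x') (gc x) < e1"
    using e1 unfolding uniformly_continuous_on_def by metis
  define d where "d = min d1 (e / (2 * (A * C + 1)))"
  have "0 < 2 * (A * C + 1)" using A_ge1 C_nn by (simp add: add_nonneg_pos)
  then have d: "0 < d" using d1 e by (simp add: d_def)
  have key: "\<bar>H v - H u\<bar> < e" if uv: "0 \<le> u" "u \<le> v" "v \<le> 1" "v - u < d" for u v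
  proof -
    have I1: "\<bar>integral {0..u} (\<lambda>x. (gc (v - x) - gc (u - x)) * S x)\<bar> \<le> (u - 0) * (e1 * C)"
    proof (rule int_const_bound)
      show "(\<lambda>x. (gc (v - x) - gc (u - x)) * S x) integrable_on {0..u}"
        using gS_int[of v 0 u] gS_int[of u 0 u] by (auto simp: left_diff_distrib intro!: integrable_diff)
      fix x assume x: "x \<in> {0..u}"
      have "dist (gc (v - x)) (gc (u - x)) < e1"
        using x uv d_def by (intro d1') (auto simp: dist_real_def)
      then have "\<bar>gc (v - x) - gc (u - x)\<bar> \<le> e1" by (simp add: dist_real_def)
      then show "\<bar>(gc (v - x) - gc (u - x)) * S x\<bar> \<le> e1 * C"
        using Snn SC e1 by (auto simp: abs_mult intro!: mult_mono)
    qed (use uv in auto)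
    have I2: "\<bar>integral {u..v} (\<lambda>x. gc (v - x) * S x)\<bar> \<le> (v - u) * (A * C)"
    proof (rule int_const_bound)
      fix x show "\<bar>gc (v - x) * S x\<bar> \<le> A * C"
        using gc_nn gc_A Snn SC A_ge1 by (auto simp: abs_mult intro!: mult_mono)
    qed (use uv gS_int in auto)
    have "u * (e1 * C) \<le> e1 * C" using uv e1 C_nn by (simp add: mult_left_le_one_le)
    also have "e1 * C < e / 2" using e C_nn by (simp add: e1_def field_simps)
    finally have a: "u * (e1 * C) < e / 2" .
    have "(v - u) * (A * C) \<le> d * (A * C)" using uv A_ge1 C_nn by (intro mult_right_mono) auto
    also have "\<dots> \<le> e / (2 * (A * C + 1)) * (A * C)" using A_ge1 C_nn by (intro mult_right_mono) (auto simp: d_def)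
    also have "\<dots> = (e / 2) * (A * C / (A * C + 1))" by simp
    also have "\<dots> < (e / 2) * 1"
    proof (intro mult_strict_left_mono)
      have "0 \<le> A * C" using A_ge1 C_nn by simp
      then show "A * C / (A * C + 1) < 1" by (simp add: divide_less_eq)
    qed (use e in auto)
    also have "\<dots> = e / 2" by simp
    finally have b: "(v - u) * (A * C) < e / 2" .
    have hd: "H v - H u = integral {0..u} (\<lambda>x. (gc (v - x) - gc (u - x)) * S x)
                    + integral {u..v} (\<lambda>x. gc (v - x) * S x)" using H_diff uv by blast
    have I1': "\<bar>integral {0..u} (\<lambda>x. (gc (v - x) - gc (u - x)) * S x)\<bar> \<le> u * (e1 * C)"
      using I1 by simp
    have tri: "\<bar>integral {0..u} (\<lambda>x. (gc (v - x) - gc (u - x)) * S x) + integral {u..v} (\<lambda>x. gc (v - x) * S x)\<bar>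
      \<le> \<bar>integral {0..u} (\<lambda>x. (gc (v - x) - gc (u - x)) * S x)\<bar> + \<bar>integral {u..v} (\<lambda>x. gc (v - x) * S x)\<bar>"
      by (rule abs_triangle_ineq)
    show ?thesis unfolding hd using I1' I2 a b tri by linarith
  qed
  show "\<exists>d>0. \<forall>x'\<in>{0..1}. dist x' y < d \<longrightarrow> dist (H x') (H y) < e"
  proof (intro exI[of _ d] conjI ballI impI d)
    fix x' assume x': "x' \<in> {0..1}" "dist x' y < d"
    show "dist (H x') (H y) < e"
    proof (cases "y \<le> x'")
      case True then show ?thesis using key[of y x'] x' y by (auto simp: dist_real_def)
    next
      case False then show ?thesis using key[of x' y] x' y by (auto simp: dist_real_def abs_minus_commute)
    qed
  qed
qed

lemma Kfc_nn: "0 \<le> Kf fc gc t a b"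
  unfolding Kf_def using fc_nn gc_nn by (auto simp: indicator_def)

definition "N t = integral {t..1} (\<lambda>y. fc (y - t) * H y)"

lemma Nint_cont: "continuous_on {t..1} (\<lambda>y. fc (y - t) * H y)" if "t \<in> {0..1}"
proof (intro continuous_intros)
  show "continuous_on {t..1} (\<lambda>y. fc (y - t))"
    by (rule continuous_on_compose2[OF fc_cont]) (auto intro!: continuous_intros)
  show "continuous_on {t..1} H" using continuous_on_subset[OF H_cont] that by auto
qed

lemma NumE_eq:
  assumes t: "t \<in> {0..1}"
  shows "(\<integral>\<^sup>+ a. ennreal (S a) * (\<integral>\<^sup>+ b. ennreal (Kf f g t a b) \<partial>lborel) \<partial>lborel) = ennreal (N t)"
proof -
  have mK: "(\<lambda>(a, b). Kf fc gc t a b) \<in> borel_measurable (lborel \<Otimes>\<^sub>M lborel)"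
    unfolding Kf_def using clampf_meas[OF fcont] clampf_meas[OF gcont] by measurable
  have mS: "S \<in> borel_measurable lborel" using Smeas by simp
  have mK1: "(\<lambda>b. Kf fc gc t a b) \<in> borel_measurable borel" for a
    unfolding Kf_def using clampf_meas[OF fcont] clampf_meas[OF gcont] by measurable
  have "(\<integral>\<^sup>+ a. ennreal (S a) * (\<integral>\<^sup>+ b. ennreal (Kf f g t a b) \<partial>lborel) \<partial>lborel)
      = (\<integral>\<^sup>+ a. (\<integral>\<^sup>+ b. ennreal (S a * Kf fc gc t a b) \<partial>lborel) \<partial>lborel)"
  proof (rule nn_integral_cong)
    fix a
    have "(\<integral>\<^sup>+ b. ennreal (S a * Kf fc gc t a b) \<partial>lborel) = (\<integral>\<^sup>+ b. ennreal (S a) * ennreal (Kf fc gc t a b) \<partial>lborel)"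
      using Snn Kfc_nn by (intro nn_integral_cong) (simp add: ennreal_mult)
    also have "\<dots> = ennreal (S a) * (\<integral>\<^sup>+ b. ennreal (Kf fc gc t a b) \<partial>lborel)"
      using mK1[of a] by (intro nn_integral_cmult) simp
    finally show "ennreal (S a) * (\<integral>\<^sup>+ b. ennreal (Kf f g t a b) \<partial>lborel) = (\<integral>\<^sup>+ b. ennreal (S a * Kf fc gc t a b) \<partial>lborel)"
      by (simp add: Kf_clamp[of f g])
  qed
  also have "\<dots> = (\<integral>\<^sup>+ b. (\<integral>\<^sup>+ a. ennreal (S a * Kf fc gc t a b) \<partial>lborel) \<partial>lborel)"
    by (rule lborel_pair.Fubini'[symmetric]) (use mK mS in measurable)
  also have "\<dots> = (\<integral>\<^sup>+ b. ennreal (fc (b - t) * H b) * indicator {t..1} b \<partial>lborel)"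
  proof (rule nn_integral_cong)
    fix b :: real
    show "(\<integral>\<^sup>+ a. ennreal (S a * Kf fc gc t a b) \<partial>lborel) = ennreal (fc (b - t) * H b) * indicator {t..1} b"
    proof (cases "b \<in> {t..1}")
      case True
      have "(\<integral>\<^sup>+ a. ennreal (S a * Kf fc gc t a b) \<partial>lborel)
          = (\<integral>\<^sup>+ a. ennreal (fc (b - t) * (gc (b - a) * S a)) * indicator {0..b} a \<partial>lborel)"
        using True t by (intro nn_integral_cong) (auto simp: Kf_def indicator_def mult_ac)
      also have "\<dots> = ennreal (fc (b - t) * H b)"
        unfolding H_def
        by (rule nn_integral_has_integral_lebesgue')
           (use fc_nn gc_nn Snn gS_int in \<open>auto intro!: has_integral_mult_right integrable_integral\<close>)
      finally show ?thesis using True by simp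
    next
      case False
      have z: "S a * Kf fc gc t a b = 0" for a using t False by (auto simp: Kf_def)
      have "(\<lambda>a. ennreal (S a * Kf fc gc t a b)) = (\<lambda>a. 0)"
        by (rule ext) (simp only: z ennreal_0)
      then have "(\<integral>\<^sup>+ a. ennreal (S a * Kf fc gc t a b) \<partial>lborel) = 0" by simp
      then show ?thesis using False by simp
    qed
  qed
  also have "\<dots> = ennreal (N t)"
    unfolding N_def
    by (rule nn_integral_has_integral_lebesgue')
       (use fc_nn fnn H_nn t in \<open>auto intro!: integrable_integral integrable_continuous_real Nint_cont\<close>)
  finally show ?thesis .
qed

lemma NumE_out:
  assumes t: "t \<notin> {0..1}"
  shows "(\<integral>\<^sup>+ a. ennreal (S a) * (\<integral>\<^sup>+ b. ennreal (Kf f g t a b) \<partial>lborel) \<partial>lborel) = 0"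
  using t by (simp add: Kf_def)

lemma extf_cont: "continuous_on {-1..1} (extf f f')"
  using extf_deriv[OF fd]
  by (metis DERIV_continuous continuous_on_eq_continuous_within)

definition "phi a y = extf f f' (y - a) * clampf H y"
definition "Q a b = integral {b..1} (\<lambda>y. phi a y)"

lemma phi_cont: "continuous_on ({0..1} \<times> {0..1}) (\<lambda>(a, y). phi a y)"
proof -
  have "continuous_on ({0..1} \<times> {0..1}) (\<lambda>z::real\<times>real. extf f f' (snd z - fst z))"
    by (rule continuous_on_compose2[OF extf_cont]) (auto intro!: continuous_intros)
  moreover have "continuous_on ({0..1} \<times> {0..1}) (\<lambda>z::real\<times>real. clampf H (snd z))"
    by (rule continuous_on_compose2[OF clampf_cont[OF H_cont]]) (auto intro!: continuous_intros)
  ultimately have "continuous_on ({0..1} \<times> {0..1}) (\<lambda>z::real\<times>real. extf f f' (snd z - fst z) * clampf H (snd z))"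
    by (intro continuous_intros)
  then show ?thesis by (simp add: phi_def case_prod_beta)
qed

lemma phi_cont1: "a \<in> {0..1} \<Longrightarrow> continuous_on {0..1} (phi a)"
  by (rule continuous_on_compose2[OF phi_cont, where f="\<lambda>y. (a, y)", simplified])
     (auto intro!: continuous_intros)

lemma dphi_cont: "continuous_on ({0..1} \<times> {t0..1}) (\<lambda>(a, y). - extd f' (y - a) * clampf H y)"
  if "t0 \<in> {0..1}"
proof -
  have "continuous_on ({0..1} \<times> {t0..1}) (\<lambda>z::real\<times>real. extd f' (snd z - fst z))"
    by (rule continuous_on_compose2[OF extd_cont[OF f'c]]) (use that in \<open>auto intro!: continuous_intros\<close>)
  moreover have "continuous_on ({0..1} \<times> {t0..1}) (\<lambda>z::real\<times>real. clampf H (snd z))"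
    by (rule continuous_on_compose2[OF clampf_cont[OF H_cont]]) (auto intro!: continuous_intros)
  ultimately have "continuous_on ({0..1} \<times> {t0..1}) (\<lambda>z::real\<times>real. - extd f' (snd z - fst z) * clampf H (snd z))"
    by (intro continuous_intros)
  then show ?thesis by (simp add: case_prod_beta)
qed

lemma Q_deriv:
  assumes t0: "t0 \<in> {0..1}"
  shows "((\<lambda>s. Q s s) has_real_derivative
     (integral {t0..1} (\<lambda>y. - extd f' (y - t0) * clampf H y) - phi t0 t0)) (at t0 within {0..1})"
proof -
  define Dt where "Dt = integral {t0..1} (\<lambda>y. - extd f' (y - t0) * clampf H y)"
  have L: "((\<lambda>a. integral (cbox t0 1) (phi a)) has_field_derivative
        integral (cbox t0 1) (\<lambda>y. - extd f' (y - t0) * clampf H y)) (at t0 within {0..1})"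
  proof (rule leibniz_rule_field_derivative[where fx="\<lambda>a y. - extd f' (y - a) * clampf H y"])
    fix a y assume a: "a \<in> {0..1::real}" and y: "y \<in> cbox t0 (1::real)"
    then have y01: "y \<in> {0..1}" using t0 by auto
    show "((\<lambda>a. phi a y) has_field_derivative - extd f' (y - a) * clampf H y) (at a within {0..1})"
      unfolding phi_def using DERIV_cmult_right[OF extf_comp_deriv[OF fd y01 a]] .
  next
    fix a assume a: "a \<in> {0..1::real}"
    show "phi a integrable_on cbox t0 1"
      using integrable_continuous[OF continuous_on_subset[OF phi_cont1[OF a]]] t0 by auto
  next
    show "continuous_on ({0..1} \<times> cbox t0 1) (\<lambda>(a, y). - extd f' (y - a) * clampf H y)"
      using dphi_cont[OF t0] by simp
  qed (use t0 in auto)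
  then have fx: "((\<lambda>a. Q a t0) has_derivative (*) Dt) (at t0 within {0..1})"
    by (simp add: Q_def Dt_def has_field_derivative_def)
  have fy: "((\<lambda>b. Q a b) has_derivative blinfun_apply (blinfun_mult_right (- phi a b))) (at b within {0..1})"
    if "a \<in> {0..1}" "b \<in> {0..1}" for a b
  proof -
    have "((\<lambda>b. integral {b..1} (phi a)) has_real_derivative - phi a b) (at b within {0..1})"
      by (rule integral_has_real_derivative'[OF phi_cont1[OF that(1)] that(2)])
    then show ?thesis unfolding Q_def has_field_derivative_eq_has_derivative_blinfun by simp
  qed
  have fyc: "continuous (at (t0, t0) within {0..1} \<times> {0..1}) (\<lambda>(a, b). blinfun_mult_right (- phi a b))"
  proof -
    have "continuous_on ({0..1} \<times> {0..1}) (\<lambda>z. blinfun_mult_right (- (\<lambda>(a, y). phi a y) z))"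
      using phi_cont by (intro continuous_intros)
    then have "continuous_on ({0..1} \<times> {0..1}) (\<lambda>(a, b). blinfun_mult_right (- phi a b))"
      by (simp add: case_prod_beta)
    then show ?thesis using t0 by (simp add: continuous_on_eq_continuous_within)
  qed
  have P: "((\<lambda>(a, b). Q a b) has_derivative (\<lambda>(ta, tb). Dt * ta + blinfun_mult_right (- phi t0 t0) tb))
      (at (t0, t0) within {0..1} \<times> {0..1})"
    by (rule has_derivative_partialsI[OF fx fy fyc]) (use t0 in auto)
  have D1: "((\<lambda>s::real. (s, s)) has_derivative (\<lambda>h. (h, h))) (at t0 within {0..1})"
    by (auto intro!: derivative_eq_intros)
  have sub: "(\<lambda>s::real. (s, s)) ` {0..1} \<subseteq> {0..1} \<times> {0..1}" by auto
  have "(((\<lambda>(a, b). Q a b) \<circ> (\<lambda>s. (s, s))) has_derivative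
      ((\<lambda>(ta, tb). Dt * ta + blinfun_mult_right (- phi t0 t0) tb) \<circ> (\<lambda>h. (h, h)))) (at t0 within {0..1})"
    by (rule diff_chain_within[OF D1 has_derivative_subset[OF P sub]])
  then have "((\<lambda>s. Q s s) has_derivative (\<lambda>x. x * Dt - x * phi t0 t0)) (at t0 within {0..1})"
    by (simp add: o_def algebra_simps)
  moreover have "(\<lambda>x. x * Dt - x * phi t0 t0) = (*) (Dt - phi t0 t0)"
    by (auto simp: fun_eq_iff algebra_simps)
  ultimately have "((\<lambda>s. Q s s) has_derivative (*) (Dt - phi t0 t0)) (at t0 within {0..1})"
    by simp
  then show ?thesis by (simp add: has_field_derivative_def Dt_def)
qed

lemma N_eq_Q: "t \<in> {0..1} \<Longrightarrow> N t = Q t t"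
  unfolding N_def Q_def phi_def
  by (rule integral_cong) (auto simp: extf_eq)

lemma N_deriv:
  assumes t0: "t0 \<in> {0..1}"
  shows "(N has_real_derivative (- integral {t0..1} (\<lambda>y. f' (y - t0) * H y) - f 0 * H t0))
           (at t0 within {0..1})"
proof -
  have e1: "integral {t0..1} (\<lambda>y. - extd f' (y - t0) * clampf H y) = - integral {t0..1} (\<lambda>y. f' (y - t0) * H y)"
    by (subst integral_neg[symmetric], rule integral_cong) (use t0 in \<open>auto simp: extd_eq\<close>)
  have e2: "phi t0 t0 = f 0 * H t0" using t0 by (simp add: phi_def extf_eq)
  show ?thesis
    using Q_deriv[OF t0] unfolding e1 e2
    by (rule has_field_derivative_transform_within[where d=1]) (use t0 N_eq_Q in auto)
qed

lemma N_cont: "continuous_on {0..1} N"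
  using N_deriv by (metis DERIV_continuous continuous_on_eq_continuous_within)

lemma N_nn: "t \<in> {0..1} \<Longrightarrow> 0 \<le> N t"
  unfolding N_def using fc_nn fnn H_nn
  by (intro integral_nonneg integrable_continuous_real Nint_cont) auto

lemma f'H_cont: "t0 \<in> {0..1} \<Longrightarrow> continuous_on {t0..1} (\<lambda>y. f' (y - t0) * H y)"
proof (intro continuous_intros)
  assume t0: "t0 \<in> {0..1}"
  show "continuous_on {t0..1} (\<lambda>y. f' (y - t0))"
    by (rule continuous_on_compose2[OF f'c]) (use t0 in \<open>auto intro!: continuous_intros\<close>)
  show "continuous_on {t0..1} H" using continuous_on_subset[OF H_cont] t0 by auto
qed

lemma f'_ftc: assumes t0: "t0 \<in> {0..1}"
  shows "((\<lambda>y. f' (y - t0)) has_integral (f (1 - t0) - f 0)) {t0..1}"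
proof -
  have "((\<lambda>y. f (y - t0)) has_vector_derivative f' (y - t0)) (at y within {t0..1})" if y: "y \<in> {t0..1}" for y
  proof -
    have g: "((\<lambda>y. y - t0) has_real_derivative 1) (at y within {t0..1})"
      by (auto intro!: derivative_eq_intros)
    have im: "(\<lambda>y. y - t0) ` {t0..1} \<subseteq> {0..1}" using t0 by auto
    have "(f has_real_derivative f' (y - t0)) (at (y - t0) within {0..1})" using fd y t0 by auto
    then have "(f has_real_derivative f' (y - t0)) (at (y - t0) within (\<lambda>y. y - t0) ` {t0..1})"
      using DERIV_subset im by blast
    from DERIV_image_chain[OF this g] show ?thesis
      by (simp add: o_def has_real_derivative_iff_has_vector_derivative)
  qed
  from fundamental_theorem_of_calculus[OF _ this] t0 show ?thesis by auto
qed

lemma Nd_bound: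
  assumes t0: "t0 \<in> {0..1}"
  shows "\<bar>- integral {t0..1} (\<lambda>y. f' (y - t0) * H y) - f 0 * H t0\<bar> \<le> 2 * A^2 * m"
proof -
  let ?I = "integral {t0..1} (\<lambda>y. f' (y - t0) * H y)"
  have int1: "(\<lambda>y. f' (y - t0) * H y) integrable_on {t0..1}"
    by (rule integrable_continuous_real[OF f'H_cont[OF t0]])
  have I0: "0 \<le> ?I" using t0 f'_nn H_nn by (intro integral_nonneg int1) auto
  have "?I \<le> integral {t0..1} (\<lambda>y. f' (y - t0) * (A * m))"
  proof (rule integral_le[OF int1])
    show "(\<lambda>y. f' (y - t0) * (A * m)) integrable_on {t0..1}"
      using f'_ftc[OF t0] by (auto intro!: integrable_on_mult_left)
    fix y assume "y \<in> {t0..1}"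
    then show "f' (y - t0) * H y \<le> f' (y - t0) * (A * m)"
      using t0 f'_nn H_le by (intro mult_left_mono) auto
  qed
  also have "\<dots> = (f (1 - t0) - f 0) * (A * m)"
    using f'_ftc[OF t0] by (simp add: integral_unique has_integral_mult_left)
  also have "\<dots> \<le> A * (A * m)"
  proof (rule mult_right_mono)
    have h: "1 - t0 \<in> {0..1}" using t0 by auto
    have "\<bar>f (1 - t0)\<bar> \<le> A" using fA h by blast
    moreover have "0 \<le> f 0" using fnn by auto
    ultimately show "f (1 - t0) - f 0 \<le> A" by linarith
    show "0 \<le> A * m" using A_ge1 m_nn by simp
  qed
  finally have I1: "?I \<le> A^2 * m" by (simp add: power2_eq_square)
  have h0: "0 \<le> f 0 * H t0" using fnn H_nn by simp
  have "f 0 * H t0 \<le> A * (A * m)"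
    using fA fnn H_le[OF t0] H_nn A_ge1 by (intro mult_mono) (auto simp: abs_le_iff)
  then have h1: "f 0 * H t0 \<le> A^2 * m" by (simp add: power2_eq_square)
  show ?thesis using I0 I1 h0 h1 by linarith
qed

end

lemma half_lemma:
  fixes h :: "real \<Rightarrow> real"
  assumes mono: "mono_on {0..1} h" and nn: "\<forall>t\<in>{0..1}. h t \<ge> 0" and hA: "\<forall>t\<in>{0..1}. \<bar>h t\<bar> \<le> A"
    and hc: "continuous_on {0..1} h" and hi: "integral {0..1} h = 1" and A1: "A \<ge> 1"
  shows "h (1 - 1 / (2 * A)) \<ge> 1 / 2"
proof -
  define c where "c = 1 - 1 / (2 * A)"
  have c: "1/2 \<le> c" "c \<le> 1" using A1 by (auto simp: c_def field_simps)
  have int: "h integrable_on {0..1}" by (rule integrable_continuous_real[OF hc])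
  have split: "integral {0..c} h + integral {c..1} h = 1"
    using Henstock_Kurzweil_Integration.integral_combine[OF _ _ int, of c] c hi by auto
  have "integral {c..1} h \<le> integral {c..1} (\<lambda>_::real. A)"
    by (rule integral_le) (use integrable_subinterval_real[OF int, of c 1] c hA in \<open>auto simp: abs_le_iff\<close>)
  also have "\<dots> = (1 - c) * A" using c by simp
  also have "\<dots> = 1/2" using A1 by (simp add: c_def field_simps)
  finally have u: "integral {c..1} h \<le> 1/2" .
  have "integral {0..c} h \<le> integral {0..c} (\<lambda>_::real. h c)"
    by (rule integral_le) (use integrable_subinterval_real[OF int, of 0 c] c mono in \<open>auto simp: mono_on_def\<close>)
  also have "\<dots> = c * h c" using c by simp
  also have "\<dots> \<le> h c" using c nn by (intro mult_left_le_one_le) auto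
  finally have l: "integral {0..c} h \<le> h c" .
  show ?thesis using split u l by (simp add: c_def)
qed

context coreC begin

definition "del = 1 / (4 * A)"

lemma del: "0 < del" "del \<le> 1/4" "1 - 2 * del = 1 - 1 / (2 * A)"
  using A_ge1 by (auto simp: del_def field_simps)

lemma f_half: "f (1 - 2 * del) \<ge> 1/2"
  unfolding del(3) by (rule half_lemma[OF fmono fnn fA fcont fint A_ge1])
lemma g_half: "g (1 - 2 * del) \<ge> 1/2"
  unfolding del(3) by (rule half_lemma[OF gmono gnn gA gcont gint A_ge1])

lemma S_low: "integral {0..del} S \<ge> del * m"
proof -
  define I0 where "I0 = integral {0..del} S"
  define I1 where "I1 = integral {del..1} S"
  have msplit: "m = I0 + I1"
    unfolding m_def I0_def I1_def
    using Henstock_Kurzweil_Integration.integral_combine[OF _ _ S_int, of 0 del 1] del by auto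
  have "integral {0..del} (\<lambda>_::real. S del) \<le> I0"
    unfolding I0_def by (rule integral_le) (use S_int Santi in auto)
  then have a: "del * S del \<le> I0" using del by simp
  have "I1 \<le> integral {del..1} (\<lambda>_::real. S del)"
    unfolding I1_def by (rule integral_le) (use S_int Santi in auto)
  then have b: "I1 \<le> (1 - del) * S del" using del by simp
  have "del * m = del * I0 + del * I1" by (simp add: msplit algebra_simps)
  also have "\<dots> \<le> del * I0 + del * ((1 - del) * S del)" using b del by (intro add_left_mono mult_left_mono) auto
  also have "\<dots> = del * I0 + (1 - del) * (del * S del)" by (simp add: algebra_simps)
  also have "\<dots> \<le> del * I0 + (1 - del) * I0" using a del by (intro add_left_mono mult_left_mono) auto
  also have "\<dots> = I0" by (simp add: algebra_simps)
  finally show ?thesis unfolding I0_def .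
qed

lemma H_low: assumes y: "y \<in> {1 - del..1}" shows "H y \<ge> del * m / 2"
proof -
  have "integral {0..del} (\<lambda>x. 1/2 * S x) \<le> integral {0..del} (\<lambda>x. gc (y - x) * S x)"
  proof (rule integral_le)
    fix x assume x: "x \<in> {0..del}"
    have "1/2 \<le> g (1 - 2 * del)" by (rule g_half)
    also have "\<dots> = gc (1 - 2 * del)" using del(1,2) by (intro clampf_eq[symmetric]) auto
    also have "\<dots> \<le> gc (y - x)" using x y by (intro gc_mono) auto
    finally show "1/2 * S x \<le> gc (y - x) * S x" using Snn by (intro mult_right_mono) auto
  qed (use S_int gS_int in auto)
  also have "\<dots> \<le> H y" unfolding H_def
    by (rule integral_subset_le) (use del y gS_int gc_nn gnn Snn in \<open>auto intro!: mult_nonneg_nonneg\<close>)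
  finally have "1/2 * integral {0..del} S \<le> H y" by simp
  then show ?thesis using S_low by simp
qed

lemma N_low: assumes t: "t \<in> {0..del}" shows "N t \<ge> del * (del * m / 4)"
proof -
  have t01: "t \<in> {0..1}" using t del by auto
  have iN: "(\<lambda>y. fc (y - t) * H y) integrable_on {t..1}"
    by (rule integrable_continuous_real[OF Nint_cont[OF t01]])
  have iN2: "(\<lambda>y. fc (y - t) * H y) integrable_on {1 - del..1}"
    by (rule integrable_subinterval_real[OF iN]) (use t del in auto)
  have "integral {1 - del..1} (\<lambda>_::real. 1/2 * (del * m / 2)) \<le> integral {1 - del..1} (\<lambda>y. fc (y - t) * H y)"
  proof (rule integral_le)
    fix y assume y: "y \<in> {1 - del..1}"
    have "1/2 \<le> f (1 - 2 * del)" by (rule f_half)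
    also have "\<dots> = fc (1 - 2 * del)" using del(1,2) by (intro clampf_eq[symmetric]) auto
    also have "\<dots> \<le> fc (y - t)" using t y by (intro fc_mono) auto
    finally show "1/2 * (del * m / 2) \<le> fc (y - t) * H y"
      using H_low[OF y] del m_nn by (intro mult_mono) auto
  qed (use iN2 in auto)
  also have "\<dots> \<le> N t" unfolding N_def
    by (rule integral_subset_le) (use del t iN iN2 fc_nn fnn H_nn in auto)
  finally show ?thesis using del by (simp add: algebra_simps)
qed

lemma intN_low: "integral {0..1} N \<ge> m / (256 * A^3)"
proof -
  have intN: "N integrable_on {0..1}" by (rule integrable_continuous_real[OF N_cont])
  have "integral {0..del} (\<lambda>_::real. del * (del * m / 4)) \<le> integral {0..del} N"
    by (rule integral_le) (use N_low integrable_subinterval_real[OF intN, of 0 del] del in auto)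
  also have "\<dots> \<le> integral {0..1} N"
    by (rule integral_subset_le) (use del intN integrable_subinterval_real[OF intN, of 0 del] N_nn in auto)
  finally have "del * (del * (del * m / 4)) \<le> integral {0..1} N" using del by simp
  moreover have "del * (del * (del * m / 4)) = m / (256 * A^3)"
    using A_ge1 by (simp add: del_def field_simps power3_eq_cube)
  ultimately show ?thesis by simp
qed

lemma NumE_ind: "NumE f g S t = ennreal (N t) * indicator {0..1} t"
  unfolding NumE_def using NumE_eq NumE_out by (cases "t \<in> {0..1}") auto

lemma DE_eq: "(\<integral>\<^sup>+ t. NumE f g S t \<partial>lborel) = ennreal (integral {0..1} N)"
  unfolding NumE_ind
  by (rule nn_integral_has_integral_lebesgue')
     (use N_nn integrable_continuous_real[OF N_cont] in auto)

theorem core_main: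
  assumes t: "t \<in> {0..1}"
  shows "\<exists>D. ((\<lambda>t. enn2real (NumE f g S t) / enn2real (\<integral>\<^sup>+ t. NumE f g S t \<partial>lborel))
             has_real_derivative D) (at t within {0..1}) \<and> \<bar>D\<bar> \<le> 512 * A^5"
proof -
  define Dr where "Dr = integral {0..1} N"
  have Dr0: "0 \<le> Dr" unfolding Dr_def
    using N_nn by (intro integral_nonneg integrable_continuous_real[OF N_cont]) auto
  have eD: "enn2real (\<integral>\<^sup>+ t. NumE f g S t \<partial>lborel) = Dr"
    unfolding DE_eq Dr_def using Dr0 Dr_def by simp
  have eN: "enn2real (NumE f g S s) = N s" if "s \<in> {0..1}" for s
    using that N_nn[OF that] by (simp add: NumE_ind)
  show ?thesis
  proof (cases "Dr = 0")
    case True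
    have "((\<lambda>s. 0::real) has_real_derivative 0) (at t within {0..1})" by simp
    then have "((\<lambda>t. enn2real (NumE f g S t) / enn2real (\<integral>\<^sup>+ t. NumE f g S t \<partial>lborel))
             has_real_derivative 0) (at t within {0..1})"
      by (rule has_field_derivative_transform_within[where d=1]) (use t True eD in auto)
    then show ?thesis using A_ge1 by (intro exI[of _ 0]) auto
  next
    case False
    then have Dp: "0 < Dr" using Dr0 by simp
    define Nd where "Nd = - integral {t..1} (\<lambda>y. f' (y - t) * H y) - f 0 * H t"
    have "((\<lambda>s. N s / Dr) has_real_derivative Nd / Dr) (at t within {0..1})"
      unfolding Nd_def by (rule DERIV_cdivide[OF N_deriv[OF t]])
    then have d: "((\<lambda>t. enn2real (NumE f g S t) / enn2real (\<integral>\<^sup>+ t. NumE f g S t \<partial>lborel))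
             has_real_derivative Nd / Dr) (at t within {0..1})"
      by (rule has_field_derivative_transform_within[where d=1]) (use t eD eN in auto)
    have b1: "\<bar>Nd\<bar> \<le> 2 * A^2 * m" unfolding Nd_def by (rule Nd_bound[OF t])
    have "m / (256 * A^3) \<le> Dr" unfolding Dr_def by (rule intN_low)
    then have b2: "m \<le> 256 * A^3 * Dr" using A_ge1 by (simp add: divide_le_eq mult_ac)
    have "\<bar>Nd\<bar> \<le> 2 * A^2 * (256 * A^3 * Dr)"
    proof -
      have "2 * A^2 * m \<le> 2 * A^2 * (256 * A^3 * Dr)" by (rule mult_left_mono[OF b2]) simp
      then show ?thesis using b1 by linarith
    qed
    also have "\<dots> = 512 * A^5 * Dr"
      by (simp add: power_add[symmetric] mult_ac numeral_eq_Suc)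
    finally have "\<bar>Nd / Dr\<bar> \<le> 512 * A^5" using Dp by (simp add: divide_le_eq)
    then show ?thesis using d by blast
  qed
qed

end

interpretation lbp: product_sigma_finite "\<lambda>_::nat. (lborel :: real measure)"
  by (simp add: product_sigma_finite_def lborel.sigma_finite_measure_axioms)

definition fcl :: "(nat \<Rightarrow> real \<Rightarrow> real) \<Rightarrow> nat \<Rightarrow> real \<Rightarrow> real" where
  "fcl f = (\<lambda>i. clampf (f i))"

definition Fi :: "(nat \<Rightarrow> real \<Rightarrow> real) \<Rightarrow> (nat \<Rightarrow> real \<Rightarrow> real) \<Rightarrow> (nat \<Rightarrow> real) \<Rightarrow> (nat \<Rightarrow> real) \<Rightarrow> nat \<Rightarrow> real" where
  "Fi f g x y i = indicator {0..1} (y i) * (if x i \<le> y i then 1 else 0) * (if x (Suc i) \<le> y i then 1 else 0)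
        * f i (y i - x i) * g i (y i - x (Suc i))"

definition Vw :: "nat \<Rightarrow> (nat \<Rightarrow> real \<Rightarrow> real) \<Rightarrow> (nat \<Rightarrow> real \<Rightarrow> real) \<Rightarrow> (nat \<Rightarrow> real) \<Rightarrow> (nat \<Rightarrow> real) \<Rightarrow> real" where
  "Vw n f g x y = (\<Prod>i\<in>{3..n+1}. indicator {0..1} (x i)) * (\<Prod>i\<in>{2..n}. Fi f g x y i)"

lemma saw_weight_Fi: "saw_weight n f g x y = (\<Prod>i\<in>{1..n+1}. indicator {0..1} (x i)) * (\<Prod>i\<in>{1..n}. Fi f g x y i)"
  unfolding saw_weight_def Fi_def by simp

lemma saw_weight_clamp: "saw_weight n f g x y = saw_weight n (fcl f) (fcl g) x y"
proof (cases "\<forall>j\<in>{1..n+1}. x j \<in> {0..1}")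
  case True
  have "Fi f g x y i = Fi (fcl f) (fcl g) x y i" if i: "i \<in> {1..n}" for i
  proof -
    have "x i \<in> {0..1}" "x (Suc i) \<in> {0..1}" using True i by auto
    then show ?thesis unfolding Fi_def fcl_def by (auto simp: indicator_def)
  qed
  then show ?thesis unfolding saw_weight_Fi by simp
next
  case False
  then obtain j where j: "j \<in> {1..n+1}" "x j \<notin> {0..1}" by blast
  have "indicator {0..1} (x j) = (0::real)" using j by simp
  then have "(\<Prod>i\<in>{1..n+1}. indicator {0..1} (x i) :: real) = 0"
    using j(1) by (intro prod_zero) auto
  then show ?thesis unfolding saw_weight_Fi by simp
qed

lemma saw_weight_factor:
  assumes n: "n \<ge> 1"
  shows "saw_weight n f g (x(1 := t)) y = Kf (f 1) (g 1) t (x 2) (y 1) * Vw n f g x y"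
proof -
  have s1: "{1..n+1} = insert 1 (insert 2 {3..n+1})" using n by auto
  have s2: "{1..n} = insert 1 {2..n}" using n by auto
  have p1: "(\<Prod>i\<in>{1..n+1}. indicator {0..1} ((x(1 := t)) i) :: real)
      = indicator {0..1} t * indicator {0..1} (x 2) * (\<Prod>i\<in>{3..n+1}. indicator {0..1} (x i))"
    unfolding s1 by (simp add: prod.insert_remove)
  have p2: "(\<Prod>i\<in>{1..n}. Fi f g (x(1 := t)) y i) = Fi f g (x(1 := t)) y 1 * (\<Prod>i\<in>{2..n}. Fi f g x y i)"
    unfolding s2 by (simp add: Fi_def)
  have p3: "Fi f g (x(1 := t)) y 1 = indicator {0..1} (y 1) * (if t \<le> y 1 then 1 else 0)
      * (if x 2 \<le> y 1 then 1 else 0) * f 1 (y 1 - t) * g 1 (y 1 - x 2)"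
    by (simp add: Fi_def numeral_2_eq_2)
  show ?thesis
    unfolding saw_weight_Fi p1 p2 p3 Vw_def Kf_def by (simp add: mult_ac)
qed

lemma Vw_meas:
  assumes fc: "\<And>i. i \<in> {2..n} \<Longrightarrow> f i \<in> borel_measurable borel"
    and gc: "\<And>i. i \<in> {2..n} \<Longrightarrow> g i \<in> borel_measurable borel"
    and X: "\<And>i. i \<in> {2..n+1} \<Longrightarrow> (\<lambda>w. X w i) \<in> borel_measurable M"
    and Y: "\<And>i. i \<in> {2..n} \<Longrightarrow> (\<lambda>w. Y w i) \<in> borel_measurable M"
  shows "(\<lambda>w. Vw n f g (X w) (Y w)) \<in> borel_measurable M"
proof -
  have a: "(\<lambda>w. \<Prod>i\<in>{3..n+1}. indicator {0..1} (X w i) :: real) \<in> borel_measurable M"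
  proof (rule borel_measurable_prod)
    fix i assume "i \<in> {3..n+1}"
    then have [measurable]: "(\<lambda>w. X w i) \<in> borel_measurable M" using X by auto
    show "(\<lambda>w. indicator {0..1} (X w i) :: real) \<in> borel_measurable M" by measurable
  qed
  have b: "(\<lambda>w. \<Prod>i\<in>{2..n}. Fi f g (X w) (Y w) i) \<in> borel_measurable M"
  proof (rule borel_measurable_prod)
    fix i assume i: "i \<in> {2..n}"
    then have [measurable]: "(\<lambda>w. X w i) \<in> borel_measurable M" "(\<lambda>w. X w (Suc i)) \<in> borel_measurable M"
      "(\<lambda>w. Y w i) \<in> borel_measurable M" "f i \<in> borel_measurable borel" "g i \<in> borel_measurable borel"
      using X Y fc gc by auto
    show "(\<lambda>w. Fi f g (X w) (Y w) i) \<in> borel_measurable M" unfolding Fi_def by measurable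
  qed
  show ?thesis unfolding Vw_def using a b by measurable
qed


abbreviation PM :: "nat set \<Rightarrow> (nat \<Rightarrow> real) measure" where
  "PM I \<equiv> PiM I (\<lambda>_. lborel)"

lemma nn_fst:
  assumes "finite J" "G \<in> borel_measurable (PM I \<Otimes>\<^sub>M PM J)"
  shows "(\<integral>\<^sup>+ z. G z \<partial>(PM I \<Otimes>\<^sub>M PM J)) = (\<integral>\<^sup>+ x. \<integral>\<^sup>+ y. G (x, y) \<partial>PM J \<partial>PM I)"
  using sigma_finite_measure.nn_integral_fst[OF lbp.sigma_finite[OF assms(1)] assms(2)] by simp

lemma int_ind01: "(\<integral>\<^sup>+ x. ennreal (\<Prod>i\<in>I. indicator {0..1} (x i)) \<partial>PM I) = 1" if "finite I"
proof -
  have "(\<integral>\<^sup>+ x. ennreal (\<Prod>i\<in>I. indicator {0..1} (x i)) \<partial>PM I)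
      = (\<integral>\<^sup>+ x. (\<Prod>i\<in>I. ennreal (indicator {0..1} (x i))) \<partial>PM I)"
    by (rule nn_integral_cong) (simp add: prod_ennreal)
  also have "\<dots> = (\<Prod>i\<in>I. \<integral>\<^sup>+ u. ennreal (indicator {0..1::real} u) \<partial>lborel)"
    by (subst lbp.product_nn_integral_prod) (use that in auto)
  also have "\<dots> = 1" by (simp add: ennreal_indicator)
  finally show ?thesis .
qed

lemma reduce_den:
  assumes fin: "finite Y" and n: "n \<ge> 1"
    and Gm: "G \<in> borel_measurable (PM {1..n+1} \<Otimes>\<^sub>M PM Y)"
  shows "(\<integral>\<^sup>+ z. G z \<partial>(PM {1..n+1} \<Otimes>\<^sub>M PM Y))
       = (\<integral>\<^sup>+ t. (\<integral>\<^sup>+ z. G ((fst z)(1 := t), snd z) \<partial>(PM {2..n+1} \<Otimes>\<^sub>M PM Y)) \<partial>lborel)"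
proof -
  have ins: "{1..n+1} = insert 1 {2..n+1}" using n by auto
  have m1: "(\<lambda>x. \<integral>\<^sup>+ y. G (x, y) \<partial>PM Y) \<in> borel_measurable (PM (insert 1 {2..n+1}))"
    using sigma_finite_measure.borel_measurable_nn_integral[OF lbp.sigma_finite[OF fin], of "curry G"]
      Gm ins by simp
  have "(\<integral>\<^sup>+ z. G z \<partial>(PM {1..n+1} \<Otimes>\<^sub>M PM Y)) = (\<integral>\<^sup>+ x. \<integral>\<^sup>+ y. G (x, y) \<partial>PM Y \<partial>PM {1..n+1})"
    by (rule nn_fst[OF fin Gm])
  also have "\<dots> = (\<integral>\<^sup>+ t. (\<integral>\<^sup>+ x. \<integral>\<^sup>+ y. G (x(1 := t), y) \<partial>PM Y \<partial>PM {2..n+1}) \<partial>lborel)"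
    unfolding ins by (rule lbp.product_nn_integral_insert_rev[OF _ _ m1]) auto
  also have "\<dots> = (\<integral>\<^sup>+ t. (\<integral>\<^sup>+ z. G ((fst z)(1 := t), snd z) \<partial>(PM {2..n+1} \<Otimes>\<^sub>M PM Y)) \<partial>lborel)"
  proof (rule nn_integral_cong)
    fix t :: real
    have mu: "(\<lambda>z. ((fst z)(1 := t), snd z)) \<in> measurable (PM {2..n+1} \<Otimes>\<^sub>M PM Y) (PM {1..n+1} \<Otimes>\<^sub>M PM Y)"
    proof (intro measurable_Pair)
      show "(\<lambda>z. (fst z)(1 := t)) \<in> measurable (PM {2..n+1} \<Otimes>\<^sub>M PM Y) (PM {1..n+1})"
        by (rule measurable_fun_upd[where J="{2..n+1}"]) (use ins in auto)
    qed simp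
    have "(\<lambda>z. G ((fst z)(1 := t), snd z)) \<in> borel_measurable (PM {2..n+1} \<Otimes>\<^sub>M PM Y)"
      using measurable_comp[OF mu Gm] by (simp add: o_def)
    from nn_fst[OF fin this]
    show "(\<integral>\<^sup>+ x. \<integral>\<^sup>+ y. G (x(1 := t), y) \<partial>PM Y \<partial>PM {2..n+1}) =
          (\<integral>\<^sup>+ z. G ((fst z)(1 := t), snd z) \<partial>(PM {2..n+1} \<Otimes>\<^sub>M PM Y))" by simp
  qed
  finally show ?thesis .
qed

lemma reduce_num:
  assumes fin: "finite J" and J1: "1 \<notin> J" and n: "n \<ge> 1"
    and Um: "U \<in> borel_measurable (PM {2..n+1} \<Otimes>\<^sub>M PM (insert 1 J))"
    and Um': "U \<in> borel_measurable (PM {2..n+1} \<Otimes>\<^sub>M PM J)"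
    and Uind: "\<And>x y v. U (x, y(1 := v)) = U (x, y)"
    and Km: "(\<lambda>(a, b). K a b) \<in> borel_measurable (lborel \<Otimes>\<^sub>M lborel)"
    and Knn: "\<And>a b. 0 \<le> K a b" and Unn: "\<And>z. 0 \<le> U z"
  shows "(\<integral>\<^sup>+ z. ennreal (K (fst z 2) (snd z 1) * U z) \<partial>(PM {2..n+1} \<Otimes>\<^sub>M PM (insert 1 J)))
   = (\<integral>\<^sup>+ a. (\<integral>\<^sup>+ x'. \<integral>\<^sup>+ y'. ennreal (U (x'(2 := a), y')) \<partial>PM J \<partial>PM {3..n+1})
          * (\<integral>\<^sup>+ b. ennreal (K a b) \<partial>lborel) \<partial>lborel)"
proof -
  have fin1: "finite (insert 1 J)" using fin by simp
  have ins: "{2..n+1} = insert 2 {3..n+1}" using n by auto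
  have Km1: "K a \<in> borel_measurable lborel" for a
    using measurable_Pair2[OF Km, of a] by simp
  have kap: "(\<lambda>a. \<integral>\<^sup>+ b. ennreal (K a b) \<partial>lborel) \<in> borel_measurable lborel"
    using lborel.borel_measurable_nn_integral[of "\<lambda>a b. ennreal (K a b)" lborel] Km by simp
  have T: "(\<lambda>x. \<integral>\<^sup>+ y. ennreal (U (x, y)) \<partial>PM J) \<in> borel_measurable (PM {2..n+1})"
    using sigma_finite_measure.borel_measurable_nn_integral[OF lbp.sigma_finite[OF fin], of "\<lambda>x y. ennreal (U (x, y))"]
      Um' by simp
  have meas: "(\<lambda>z. ennreal (K (fst z 2) (snd z 1) * U z)) \<in> borel_measurable (PM {2..n+1} \<Otimes>\<^sub>M PM (insert 1 J))"
  proof -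
    have c1: "(\<lambda>z. (fst z 2, snd z 1)) \<in> measurable (PM {2..n+1} \<Otimes>\<^sub>M PM (insert 1 J)) (lborel \<Otimes>\<^sub>M lborel)"
      using n by (intro measurable_Pair) auto
    have "(\<lambda>z. K (fst z 2) (snd z 1)) \<in> borel_measurable (PM {2..n+1} \<Otimes>\<^sub>M PM (insert 1 J))"
      using measurable_comp[OF c1 Km] by (simp add: o_def)
    then show ?thesis using Um by measurable
  qed
  have "(\<integral>\<^sup>+ z. ennreal (K (fst z 2) (snd z 1) * U z) \<partial>(PM {2..n+1} \<Otimes>\<^sub>M PM (insert 1 J)))
      = (\<integral>\<^sup>+ x. \<integral>\<^sup>+ y. ennreal (K (x 2) (y 1) * U (x, y)) \<partial>PM (insert 1 J) \<partial>PM {2..n+1})"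
    using nn_fst[OF fin1 meas] by simp
  also have "\<dots> = (\<integral>\<^sup>+ x. (\<integral>\<^sup>+ y. ennreal (U (x, y)) \<partial>PM J) * (\<integral>\<^sup>+ b. ennreal (K (x 2) b) \<partial>lborel) \<partial>PM {2..n+1})"
  proof (rule nn_integral_cong)
    fix x assume x: "x \<in> space (PM {2..n+1})"
    have my: "(\<lambda>y. ennreal (K (x 2) (y 1) * U (x, y))) \<in> borel_measurable (PM (insert 1 J))"
      using measurable_Pair2[OF meas x] by simp
    have "(\<integral>\<^sup>+ y. ennreal (K (x 2) (y 1) * U (x, y)) \<partial>PM (insert 1 J))
        = (\<integral>\<^sup>+ y. \<integral>\<^sup>+ v. ennreal (K (x 2) ((y(1 := v)) 1) * U (x, y(1 := v))) \<partial>lborel \<partial>PM J)"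
      by (rule lbp.product_nn_integral_insert[OF fin J1 my])
    also have "\<dots> = (\<integral>\<^sup>+ y. ennreal (U (x, y)) * (\<integral>\<^sup>+ v. ennreal (K (x 2) v) \<partial>lborel) \<partial>PM J)"
    proof (rule nn_integral_cong)
      fix y
      have "(\<integral>\<^sup>+ v. ennreal (K (x 2) ((y(1 := v)) 1) * U (x, y(1 := v))) \<partial>lborel)
          = (\<integral>\<^sup>+ v. ennreal (U (x, y)) * ennreal (K (x 2) v) \<partial>lborel)"
      proof (rule nn_integral_cong)
        fix v
        have u: "U (x, y(1 := v)) = U (x, y)" by (rule Uind)
        show "ennreal (K (x 2) ((y(1 := v)) 1) * U (x, y(1 := v))) = ennreal (U (x, y)) * ennreal (K (x 2) v)"
          unfolding u fun_upd_same using Knn Unn by (simp add: ennreal_mult mult.commute)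
      qed
      also have "\<dots> = ennreal (U (x, y)) * (\<integral>\<^sup>+ v. ennreal (K (x 2) v) \<partial>lborel)"
        using Km1 by (intro nn_integral_cmult) simp
      finally show "(\<integral>\<^sup>+ v. ennreal (K (x 2) ((y(1 := v)) 1) * U (x, y(1 := v))) \<partial>lborel)
          = ennreal (U (x, y)) * (\<integral>\<^sup>+ v. ennreal (K (x 2) v) \<partial>lborel)" .
    qed
    also have "\<dots> = (\<integral>\<^sup>+ y. ennreal (U (x, y)) \<partial>PM J) * (\<integral>\<^sup>+ v. ennreal (K (x 2) v) \<partial>lborel)"
      using measurable_Pair2[OF Um' x] by (intro nn_integral_multc) simp
    finally show "(\<integral>\<^sup>+ y. ennreal (K (x 2) (y 1) * U (x, y)) \<partial>PM (insert 1 J))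
        = (\<integral>\<^sup>+ y. ennreal (U (x, y)) \<partial>PM J) * (\<integral>\<^sup>+ b. ennreal (K (x 2) b) \<partial>lborel)" .
  qed
  also have "\<dots> = (\<integral>\<^sup>+ a. (\<integral>\<^sup>+ x'. (\<integral>\<^sup>+ y. ennreal (U (x'(2 := a), y)) \<partial>PM J)
        * (\<integral>\<^sup>+ b. ennreal (K ((x'(2 := a)) 2) b) \<partial>lborel) \<partial>PM {3..n+1}) \<partial>lborel)"
  proof -
    have m2: "(\<lambda>x. (\<integral>\<^sup>+ y. ennreal (U (x, y)) \<partial>PM J) * (\<integral>\<^sup>+ b. ennreal (K (x 2) b) \<partial>lborel))
        \<in> borel_measurable (PM (insert 2 {3..n+1}))"
    proof -
      have "(\<lambda>x::nat\<Rightarrow>real. x 2) \<in> measurable (PM {2..n+1}) lborel" using n by simp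
      from measurable_comp[OF this kap] have "(\<lambda>x. \<integral>\<^sup>+ b. ennreal (K (x 2) b) \<partial>lborel) \<in> borel_measurable (PM {2..n+1})"
        by (simp add: o_def)
      then show ?thesis using T ins by simp
    qed
    show ?thesis unfolding ins by (rule lbp.product_nn_integral_insert_rev[OF _ _ m2]) auto
  qed
  also have "\<dots> = (\<integral>\<^sup>+ a. (\<integral>\<^sup>+ x'. \<integral>\<^sup>+ y'. ennreal (U (x'(2 := a), y')) \<partial>PM J \<partial>PM {3..n+1})
          * (\<integral>\<^sup>+ b. ennreal (K a b) \<partial>lborel) \<partial>lborel)"
  proof (rule nn_integral_cong)
    fix a :: real
    have mm: "(\<lambda>x'. \<integral>\<^sup>+ y. ennreal (U (x'(2 := a), y)) \<partial>PM J) \<in> borel_measurable (PM {3..n+1})"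
    proof -
      have "(\<lambda>x'. x'(2 := a)) \<in> measurable (PM {3..n+1}) (PM {2..n+1})"
        by (rule measurable_fun_upd[where J="{3..n+1}"]) (use ins in auto)
      from measurable_comp[OF this T] show ?thesis by (simp add: o_def)
    qed
    show "(\<integral>\<^sup>+ x'. (\<integral>\<^sup>+ y. ennreal (U (x'(2 := a), y)) \<partial>PM J)
        * (\<integral>\<^sup>+ b. ennreal (K ((x'(2 := a)) 2) b) \<partial>lborel) \<partial>PM {3..n+1})
      = (\<integral>\<^sup>+ x'. \<integral>\<^sup>+ y'. ennreal (U (x'(2 := a), y')) \<partial>PM J \<partial>PM {3..n+1}) * (\<integral>\<^sup>+ b. ennreal (K a b) \<partial>lborel)"
      using nn_integral_multc[OF mm] by simp
  qed
  finally show ?thesis .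
qed

lemma prod_ind_meas: "(\<lambda>y. \<Prod>i\<in>J. indicator {0..1} (y i) :: real) \<in> borel_measurable (PM I)" if "J \<subseteq> I"
proof (rule borel_measurable_prod)
  fix i assume "i \<in> J"
  then have "i \<in> I" using that by auto
  then have [measurable]: "(\<lambda>y::nat\<Rightarrow>real. y i) \<in> measurable (PM I) lborel" by simp
  show "(\<lambda>y. indicator {0..1} (y i) :: real) \<in> borel_measurable (PM I)"
    by (rule measurable_compose[OF _ borel_measurable_indicator, where N=lborel]) (use \<open>i \<in> I\<close> in simp_all)
qed

lemma SS_props:
  assumes fin: "finite J" and n: "n \<ge> 1"
    and Um': "U \<in> borel_measurable (PM {2..n+1} \<Otimes>\<^sub>M PM J)"
    and Unn: "\<And>z. 0 \<le> U z"
    and Umono: "\<And>x y a b. a \<le> b \<Longrightarrow> U (x(2 := b), y) \<le> U (x(2 := a), y)"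
    and Ubd: "\<And>x y. U (x, y) \<le> Cb * ((\<Prod>i\<in>{3..n+1}. indicator {0..1} (x i)) * (\<Prod>i\<in>J. indicator {0..1} (y i)))"
    and Cb: "0 \<le> Cb"
  shows "(\<lambda>a. \<integral>\<^sup>+ x'. \<integral>\<^sup>+ y'. ennreal (U (x'(2 := a), y')) \<partial>PM J \<partial>PM {3..n+1}) \<in> borel_measurable borel"
    and "(\<integral>\<^sup>+ x'. \<integral>\<^sup>+ y'. ennreal (U (x'(2 := a), y')) \<partial>PM J \<partial>PM {3..n+1}) \<le> ennreal Cb"
    and "a \<le> b \<Longrightarrow> (\<integral>\<^sup>+ x'. \<integral>\<^sup>+ y'. ennreal (U (x'(2 := b), y')) \<partial>PM J \<partial>PM {3..n+1})
               \<le> (\<integral>\<^sup>+ x'. \<integral>\<^sup>+ y'. ennreal (U (x'(2 := a), y')) \<partial>PM J \<partial>PM {3..n+1})"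
proof -
  have ins: "{2..n+1} = {3..n+1} \<union> {2}" using n by auto
  have T: "(\<lambda>x. \<integral>\<^sup>+ y. ennreal (U (x, y)) \<partial>PM J) \<in> borel_measurable (PM {2..n+1})"
    using sigma_finite_measure.borel_measurable_nn_integral[OF lbp.sigma_finite[OF fin], of "\<lambda>x y. ennreal (U (x, y))"]
      Um' by simp
  have upd: "(\<lambda>p. (snd p)(2 := fst p)) \<in> measurable (lborel \<Otimes>\<^sub>M PM {3..n+1}) (PM {2..n+1})"
    by (rule measurable_fun_upd[OF ins]) auto
  have T2: "(\<lambda>p. \<integral>\<^sup>+ y. ennreal (U ((snd p)(2 := fst p), y)) \<partial>PM J) \<in> borel_measurable (lborel \<Otimes>\<^sub>M PM {3..n+1})"
    using measurable_comp[OF upd T] by (simp add: o_def)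
  have "(\<lambda>a. \<integral>\<^sup>+ x'. \<integral>\<^sup>+ y'. ennreal (U (x'(2 := a), y')) \<partial>PM J \<partial>PM {3..n+1}) \<in> borel_measurable lborel"
    using sigma_finite_measure.borel_measurable_nn_integral[OF lbp.sigma_finite[of "{3..n+1}"],
        of "\<lambda>a x'. \<integral>\<^sup>+ y'. ennreal (U (x'(2 := a), y')) \<partial>PM J" lborel] T2
    by (simp add: case_prod_beta)
  then show "(\<lambda>a. \<integral>\<^sup>+ x'. \<integral>\<^sup>+ y'. ennreal (U (x'(2 := a), y')) \<partial>PM J \<partial>PM {3..n+1}) \<in> borel_measurable borel"
    by simp
  have Pxm: "(\<lambda>x. \<Prod>i\<in>{3..n+1}. indicator {0..1} (x i) :: real) \<in> borel_measurable (PM {3..n+1})"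
    by (rule prod_ind_meas) simp
  have Pym: "(\<lambda>y. \<Prod>i\<in>J. indicator {0..1} (y i) :: real) \<in> borel_measurable (PM J)"
    by (rule prod_ind_meas) simp
  have "(\<integral>\<^sup>+ x'. \<integral>\<^sup>+ y'. ennreal (U (x'(2 := a), y')) \<partial>PM J \<partial>PM {3..n+1})
      \<le> (\<integral>\<^sup>+ x'. \<integral>\<^sup>+ y'. ennreal (Cb * (\<Prod>i\<in>{3..n+1}. indicator {0..1} (x' i))) * ennreal (\<Prod>i\<in>J. indicator {0..1} (y' i)) \<partial>PM J \<partial>PM {3..n+1})"
  proof (intro nn_integral_mono)
    fix x' y'
    have e: "(\<Prod>i\<in>{3..n+1}. indicator {0..1} ((x'(2 := a)) i)) = (\<Prod>i\<in>{3..n+1}. indicator {0..1} (x' i) :: real)"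
      by (rule prod.cong) auto
    have "U (x'(2 := a), y') \<le> Cb * (\<Prod>i\<in>{3..n+1}. indicator {0..1} (x' i)) * (\<Prod>i\<in>J. indicator {0..1} (y' i))"
      using Ubd[of "x'(2 := a)" y'] unfolding e by (simp add: mult.assoc)
    then show "ennreal (U (x'(2 := a), y')) \<le> ennreal (Cb * (\<Prod>i\<in>{3..n+1}. indicator {0..1} (x' i))) * ennreal (\<Prod>i\<in>J. indicator {0..1} (y' i))"
      using Cb by (simp add: ennreal_mult[symmetric] prod_nonneg ennreal_leI)
  qed
  also have "\<dots> = (\<integral>\<^sup>+ x'. ennreal (Cb * (\<Prod>i\<in>{3..n+1}. indicator {0..1} (x' i))) \<partial>PM {3..n+1})"
  proof (rule nn_integral_cong)
    fix x'
    show "(\<integral>\<^sup>+ y'. ennreal (Cb * (\<Prod>i\<in>{3..n+1}. indicator {0..1} (x' i))) * ennreal (\<Prod>i\<in>J. indicator {0..1} (y' i)) \<partial>PM J)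
        = ennreal (Cb * (\<Prod>i\<in>{3..n+1}. indicator {0..1} (x' i)))"
      using nn_integral_cmult[of "\<lambda>y'. ennreal (\<Prod>i\<in>J. indicator {0..1} (y' i))" "PM J"] Pym int_ind01[OF fin]
      by simp
  qed
  also have "\<dots> = ennreal Cb * (\<integral>\<^sup>+ x'. ennreal (\<Prod>i\<in>{3..n+1}. indicator {0..1} (x' i)) \<partial>PM {3..n+1})"
    using Cb Pxm by (subst nn_integral_cmult[symmetric]) (auto intro!: nn_integral_cong simp: ennreal_mult prod_nonneg)
  also have "\<dots> = ennreal Cb" using int_ind01[of "{3..n+1}"] by simp
  finally show "(\<integral>\<^sup>+ x'. \<integral>\<^sup>+ y'. ennreal (U (x'(2 := a), y')) \<partial>PM J \<partial>PM {3..n+1}) \<le> ennreal Cb" .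
  show "a \<le> b \<Longrightarrow> (\<integral>\<^sup>+ x'. \<integral>\<^sup>+ y'. ennreal (U (x'(2 := b), y')) \<partial>PM J \<partial>PM {3..n+1})
               \<le> (\<integral>\<^sup>+ x'. \<integral>\<^sup>+ y'. ennreal (U (x'(2 := a), y')) \<partial>PM J \<partial>PM {3..n+1})"
    using Umono by (intro nn_integral_mono ennreal_leI) auto
qed


lemma Fi_nn: "0 \<le> F i u \<Longrightarrow> (\<And>u. 0 \<le> F i u) \<Longrightarrow> (\<And>u. 0 \<le> G i u) \<Longrightarrow> 0 \<le> Fi F G x y i"
  unfolding Fi_def by (auto simp: indicator_def)

lemma Vw_nn:
  assumes "\<And>i u. i \<in> {2..n} \<Longrightarrow> 0 \<le> F i u" "\<And>i u. i \<in> {2..n} \<Longrightarrow> 0 \<le> G i u"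
  shows "0 \<le> Vw n F G x y"
  unfolding Vw_def using assms
  by (intro mult_nonneg_nonneg prod_nonneg) (auto simp: Fi_def indicator_def)

lemma Vw_bound:
  assumes F: "\<And>i u. i \<in> {2..n} \<Longrightarrow> 0 \<le> F i u \<and> F i u \<le> BF i"
    and G: "\<And>i u. i \<in> {2..n} \<Longrightarrow> 0 \<le> G i u \<and> G i u \<le> BG i"
  shows "Vw n F G x y \<le> (\<Prod>i\<in>{2..n}. BF i * BG i)
            * ((\<Prod>i\<in>{3..n+1}. indicator {0..1} (x i)) * (\<Prod>i\<in>{2..n}. indicator {0..1} (y i)))"
proof -
  have Fi_le: "Fi F G x y i \<le> BF i * BG i * indicator {0..1} (y i)" if i: "i \<in> {2..n}" for i
  proof -
    have "0 \<le> BF i" "0 \<le> BG i" using F[OF i, of 0] G[OF i, of 0] by auto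
    have "F i (y i - x i) * G i (y i - x (Suc i)) \<le> BF i * BG i"
      using F[OF i] G[OF i] by (intro mult_mono) (auto intro: order.trans)
    then show ?thesis unfolding Fi_def using F[OF i] G[OF i] \<open>0 \<le> BF i\<close> \<open>0 \<le> BG i\<close>
      by (auto simp: indicator_def)
  qed
  have Fi0: "0 \<le> Fi F G x y i" if i: "i \<in> {2..n}" for i
    unfolding Fi_def using F[OF i] G[OF i] by (auto simp: indicator_def)
  have "(\<Prod>i\<in>{2..n}. Fi F G x y i) \<le> (\<Prod>i\<in>{2..n}. BF i * BG i * indicator {0..1} (y i))"
    using Fi_le Fi0 by (intro prod_mono) auto
  also have "\<dots> = (\<Prod>i\<in>{2..n}. BF i * BG i) * (\<Prod>i\<in>{2..n}. indicator {0..1} (y i))"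
    by (simp add: prod.distrib)
  finally have a: "(\<Prod>i\<in>{2..n}. Fi F G x y i) \<le> (\<Prod>i\<in>{2..n}. BF i * BG i) * (\<Prod>i\<in>{2..n}. indicator {0..1} (y i))" .
  have px: "0 \<le> (\<Prod>i\<in>{3..n+1}. indicator {0..1} (x i) :: real)" by (intro prod_nonneg) auto
  show ?thesis unfolding Vw_def using mult_left_mono[OF a px] by (simp add: mult_ac)
qed

lemma Vw_mono:
  assumes n: "n \<ge> 2" and F2: "\<And>u v. u \<le> v \<Longrightarrow> F 2 u \<le> F 2 v"
    and F: "\<And>i u. i \<in> {2..n} \<Longrightarrow> 0 \<le> F i u" and G: "\<And>i u. i \<in> {2..n} \<Longrightarrow> 0 \<le> G i u"
    and ab: "a \<le> b"
  shows "Vw n F G (x(2 := b)) y \<le> Vw n F G (x(2 := a)) y"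
proof -
  have ins: "{2..n} = insert 2 {3..n}" using n by auto
  have px: "(\<Prod>i\<in>{3..n+1}. indicator {0..1} ((x(2 := c)) i)) = (\<Prod>i\<in>{3..n+1}. indicator {0..1} (x i) :: real)" for c
    by (rule prod.cong) auto
  have pr: "(\<Prod>i\<in>{3..n}. Fi F G (x(2 := c)) y i) = (\<Prod>i\<in>{3..n}. Fi F G x y i)" for c
    by (rule prod.cong) (auto simp: Fi_def)
  have e: "Fi F G (x(2 := c)) y 2 = indicator {0..1} (y 2) * (if c \<le> y 2 then 1 else 0)
      * (if x 3 \<le> y 2 then 1 else 0) * F 2 (y 2 - c) * G 2 (y 2 - x 3)" for c
    by (simp add: Fi_def eval_nat_numeral)
  have F2n: "0 \<le> F 2 u" "0 \<le> G 2 u" for u using F G n by auto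
  have le2: "Fi F G (x(2 := b)) y 2 \<le> Fi F G (x(2 := a)) y 2"
  proof (cases "b \<le> y 2")
    case True
    then have "a \<le> y 2" using ab by simp
    moreover have "F 2 (y 2 - b) \<le> F 2 (y 2 - a)" using ab by (intro F2) simp
    ultimately show ?thesis unfolding e using True F2n
      by (auto simp: indicator_def intro!: mult_right_mono)
  next
    case False
    then show ?thesis unfolding e using F2n by (auto simp: indicator_def)
  qed
  have r: "0 \<le> (\<Prod>i\<in>{3..n}. Fi F G x y i)"
    using F G by (intro prod_nonneg) (auto simp: Fi_def indicator_def)
  have p: "0 \<le> (\<Prod>i\<in>{3..n+1}. indicator {0..1} (x i) :: real)" by (intro prod_nonneg) auto
  have nin: "(2::nat) \<notin> {3..n}" by simp
  have V: "Vw n F G (x(2 := c)) y = (\<Prod>i\<in>{3..n+1}. indicator {0..1} (x i)) * (Fi F G (x(2 := c)) y 2 * (\<Prod>i\<in>{3..n}. Fi F G x y i))" for c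
    unfolding Vw_def ins prod.insert[OF finite_atLeastAtMost nin] px pr by (rule refl)
  show ?thesis unfolding V
    by (intro mult_left_mono mult_right_mono le2 r p)
qed


lemma assemble:
  fixes f1 g1 :: "real \<Rightarrow> real" and W :: "real \<Rightarrow> (nat \<Rightarrow> real) \<times> (nat \<Rightarrow> real) \<Rightarrow> real"
    and D0 U :: "(nat \<Rightarrow> real) \<times> (nat \<Rightarrow> real) \<Rightarrow> real"
  assumes n: "n \<ge> 2" and fin: "finite J" and J1: "1 \<notin> J" and Y: "Y = insert 1 J"
    and hW: "\<And>t z. z \<in> space (PM {2..n+1} \<Otimes>\<^sub>M PM Y) \<Longrightarrow> W t z = Kf f1 g1 t (fst z 2) (snd z 1) * U z"
    and hD: "\<And>t z. D0 ((fst z)(1 := t), snd z) = W t z"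
    and D0m: "D0 \<in> borel_measurable (PM {1..n+1} \<Otimes>\<^sub>M PM Y)"
    and D0nn: "\<And>z. 0 \<le> D0 z"
    and Um: "U \<in> borel_measurable (PM {2..n+1} \<Otimes>\<^sub>M PM Y)"
    and Um': "U \<in> borel_measurable (PM {2..n+1} \<Otimes>\<^sub>M PM J)"
    and Uind: "\<And>x y v. U (x, y(1 := v)) = U (x, y)"
    and Unn: "\<And>z. 0 \<le> U z"
    and Umono: "\<And>x y a b. a \<le> b \<Longrightarrow> U (x(2 := b), y) \<le> U (x(2 := a), y)"
    and Ubd: "\<And>x y. U (x, y) \<le> Cb * ((\<Prod>i\<in>{3..n+1}. indicator {0..1} (x i)) * (\<Prod>i\<in>J. indicator {0..1} (y i)))"
    and Cb: "0 \<le> Cb"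
    and fmono: "mono_on {0..1} f1" and gmono: "mono_on {0..1} g1"
    and fnn: "\<forall>t\<in>{0..1}. f1 t \<ge> 0" and gnn: "\<forall>t\<in>{0..1}. g1 t \<ge> 0"
    and fC: "C1_on01 f1" and gC: "C1_on01 g1"
    and fint: "integral {0..1} f1 = 1" and gint: "integral {0..1} g1 = 1"
    and fA: "\<forall>t\<in>{0..1}. \<bar>f1 t\<bar> \<le> A" and gA: "\<forall>t\<in>{0..1}. \<bar>g1 t\<bar> \<le> A"
  shows "\<forall>t\<in>{0..1}. \<exists>D. ((\<lambda>t. (LINT z|(PM {2..n+1} \<Otimes>\<^sub>M PM Y). W t z) / (LINT z|(PM {1..n+1} \<Otimes>\<^sub>M PM Y). D0 z))
           has_real_derivative D) (at t within {0..1}) \<and> \<bar>D\<bar> \<le> 512 * A^5"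
proof -
  from fC obtain f1' where f1': "continuous_on {0..1} f1'" "\<forall>t\<in>{0..1}. (f1 has_real_derivative f1' t) (at t within {0..1})"
    unfolding C1_on01_def by blast
  from gC obtain g1' where g1': "continuous_on {0..1} g1'" "\<forall>t\<in>{0..1}. (g1 has_real_derivative g1' t) (at t within {0..1})"
    unfolding C1_on01_def by blast
  have n1: "n \<ge> 1" using n by simp
  have finY: "finite Y" using fin Y by simp
  define SS where "SS a = (\<integral>\<^sup>+ x'. \<integral>\<^sup>+ y'. ennreal (U (x'(2 := a), y')) \<partial>PM J \<partial>PM {3..n+1})" for a
  have SSp1: "(\<lambda>a. SS a) \<in> borel_measurable borel"
    unfolding SS_def by (rule SS_props(1)[OF fin n1 Um' Unn Umono Ubd Cb])
  have SSp2: "SS a \<le> ennreal Cb" for a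
    unfolding SS_def by (rule SS_props(2)[OF fin n1 Um' Unn Umono Ubd Cb])
  have SSp3: "SS b \<le> SS a" if "a \<le> b" for a b
    unfolding SS_def by (rule SS_props(3)[OF fin n1 Um' Unn Umono Ubd Cb that])
  define S where "S a = enn2real (SS a)" for a
  have SS_S: "SS a = ennreal (S a)" for a
    using SSp2[of a] unfolding S_def by (cases "SS a") (auto simp: top_unique)
  have Sm: "S \<in> borel_measurable borel" unfolding S_def using SSp1 by measurable
  have Snn: "0 \<le> S x" for x unfolding S_def by simp
  have SC: "S x \<le> Cb" for x using SSp2[of x] Cb unfolding SS_S by simp
  have Santi: "S b \<le> S a" if "a \<le> b" for a b using SSp3[OF that] Snn[of a] unfolding SS_S by simp
  interpret C: coreC f1 g1 f1' g1' S A Cb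
    using fmono gmono fnn gnn f1'(2) g1'(2) f1'(1) g1'(1) fint gint fA gA Sm Snn SC Santi by (rule coreC.intro)
  have Kfm0: "(\<lambda>(a, b). Kf (clampf f1) (clampf g1) t a b) \<in> borel_measurable (lborel \<Otimes>\<^sub>M lborel)" for t
    unfolding Kf_def using clampf_meas[OF C.fcont] clampf_meas[OF C.gcont] by measurable
  have Kfe: "(\<lambda>(a, b). Kf f1 g1 t a b) = (\<lambda>(a, b). Kf (clampf f1) (clampf g1) t a b)" for t
    by (rule ext) (simp add: case_prod_beta Kf_clamp[of f1 g1])
  have Kfm: "(\<lambda>(a, b). Kf f1 g1 t a b) \<in> borel_measurable (lborel \<Otimes>\<^sub>M lborel)" for t
    unfolding Kfe by (rule Kfm0)
  have Kfnn: "0 \<le> Kf f1 g1 t a b" for t a b by (subst Kf_clamp) (rule C.Kfc_nn)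
  have num: "(LINT z|(PM {2..n+1} \<Otimes>\<^sub>M PM Y). W t z) = enn2real (NumE f1 g1 S t)"
    and numE: "(\<integral>\<^sup>+ z. ennreal (W t z) \<partial>(PM {2..n+1} \<Otimes>\<^sub>M PM Y)) = NumE f1 g1 S t" for t
  proof -
    have mKU: "(\<lambda>z. Kf f1 g1 t (fst z 2) (snd z 1) * U z) \<in> borel_measurable (PM {2..n+1} \<Otimes>\<^sub>M PM Y)"
    proof -
      have c1: "(\<lambda>z. (fst z 2, snd z 1)) \<in> measurable (PM {2..n+1} \<Otimes>\<^sub>M PM Y) (lborel \<Otimes>\<^sub>M lborel)"
        using n Y by (intro measurable_Pair) auto
      have "(\<lambda>z. Kf f1 g1 t (fst z 2) (snd z 1)) \<in> borel_measurable (PM {2..n+1} \<Otimes>\<^sub>M PM Y)"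
        using measurable_comp[OF c1 Kfm] by (simp add: o_def)
      then show ?thesis using Um by measurable
    qed
    have e1: "(\<integral>\<^sup>+ z. ennreal (W t z) \<partial>(PM {2..n+1} \<Otimes>\<^sub>M PM Y))
        = (\<integral>\<^sup>+ z. ennreal (Kf f1 g1 t (fst z 2) (snd z 1) * U z) \<partial>(PM {2..n+1} \<Otimes>\<^sub>M PM Y))"
      by (rule nn_integral_cong) (simp add: hW)
    also have "\<dots> = (\<integral>\<^sup>+ a. SS a * (\<integral>\<^sup>+ b. ennreal (Kf f1 g1 t a b) \<partial>lborel) \<partial>lborel)"
      unfolding SS_def Y
      by (rule reduce_num[OF fin J1 n1 Um[unfolded Y] Um' Uind Kfm]) (use Kfnn Unn in auto)
    also have "\<dots> = NumE f1 g1 S t" unfolding NumE_def SS_S ..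
    finally show "(\<integral>\<^sup>+ z. ennreal (W t z) \<partial>(PM {2..n+1} \<Otimes>\<^sub>M PM Y)) = NumE f1 g1 S t" .
    have "(LINT z|(PM {2..n+1} \<Otimes>\<^sub>M PM Y). W t z) = (LINT z|(PM {2..n+1} \<Otimes>\<^sub>M PM Y). Kf f1 g1 t (fst z 2) (snd z 1) * U z)"
      by (rule Bochner_Integration.integral_cong) (simp_all add: hW)
    also have "\<dots> = enn2real (\<integral>\<^sup>+ z. ennreal (Kf f1 g1 t (fst z 2) (snd z 1) * U z) \<partial>(PM {2..n+1} \<Otimes>\<^sub>M PM Y))"
      by (rule integral_eq_nn_integral[OF mKU]) (use Kfnn Unn in auto)
    also have "\<dots> = enn2real (NumE f1 g1 S t)"
      using \<open>(\<integral>\<^sup>+ z. ennreal (W t z) \<partial>(PM {2..n+1} \<Otimes>\<^sub>M PM Y)) = NumE f1 g1 S t\<close> e1 by simp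
    finally show "(LINT z|(PM {2..n+1} \<Otimes>\<^sub>M PM Y). W t z) = enn2real (NumE f1 g1 S t)" .
  qed
  have den: "(LINT z|(PM {1..n+1} \<Otimes>\<^sub>M PM Y). D0 z) = enn2real (\<integral>\<^sup>+ t. NumE f1 g1 S t \<partial>lborel)"
  proof -
    have "(LINT z|(PM {1..n+1} \<Otimes>\<^sub>M PM Y). D0 z) = enn2real (\<integral>\<^sup>+ z. ennreal (D0 z) \<partial>(PM {1..n+1} \<Otimes>\<^sub>M PM Y))"
      by (rule integral_eq_nn_integral[OF D0m]) (use D0nn in auto)
    also have "(\<integral>\<^sup>+ z. ennreal (D0 z) \<partial>(PM {1..n+1} \<Otimes>\<^sub>M PM Y))
        = (\<integral>\<^sup>+ t. (\<integral>\<^sup>+ z. ennreal (D0 ((fst z)(1 := t), snd z)) \<partial>(PM {2..n+1} \<Otimes>\<^sub>M PM Y)) \<partial>lborel)"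
      by (rule reduce_den[OF finY n1]) (use D0m in measurable)
    also have "\<dots> = (\<integral>\<^sup>+ t. NumE f1 g1 S t \<partial>lborel)"
      unfolding hD numE ..
    finally show ?thesis .
  qed
  show ?thesis
    unfolding num den using C.core_main by blast
qed


lemma sw_meas:
  assumes fc: "\<And>i. i \<in> {1..n} \<Longrightarrow> F i \<in> borel_measurable borel"
    and gc: "\<And>i. i \<in> {1..n} \<Longrightarrow> G i \<in> borel_measurable borel"
    and X: "\<And>i. i \<in> {1..n+1} \<Longrightarrow> (\<lambda>w. X w i) \<in> borel_measurable M"
    and Y: "\<And>i. i \<in> {1..n} \<Longrightarrow> (\<lambda>w. Y w i) \<in> borel_measurable M"
  shows "(\<lambda>w. saw_weight n F G (X w) (Y w)) \<in> borel_measurable M"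
proof -
  have a: "(\<lambda>w. \<Prod>i\<in>{1..n+1}. indicator {0..1} (X w i) :: real) \<in> borel_measurable M"
  proof (rule borel_measurable_prod)
    fix i assume "i \<in> {1..n+1}"
    then have [measurable]: "(\<lambda>w. X w i) \<in> borel_measurable M" using X by auto
    show "(\<lambda>w. indicator {0..1} (X w i) :: real) \<in> borel_measurable M" by measurable
  qed
  have b: "(\<lambda>w. \<Prod>i\<in>{1..n}. Fi F G (X w) (Y w) i) \<in> borel_measurable M"
  proof (rule borel_measurable_prod)
    fix i assume i: "i \<in> {1..n}"
    then have [measurable]: "(\<lambda>w. X w i) \<in> borel_measurable M" "(\<lambda>w. X w (Suc i)) \<in> borel_measurable M"
      "(\<lambda>w. Y w i) \<in> borel_measurable M" "F i \<in> borel_measurable borel" "G i \<in> borel_measurable borel"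
      using X Y fc gc by auto
    show "(\<lambda>w. Fi F G (X w) (Y w) i) \<in> borel_measurable M" unfolding Fi_def by measurable
  qed
  show ?thesis unfolding saw_weight_Fi using a b by measurable
qed

lemma sw_nn:
  assumes "\<And>i u. i \<in> {1..n} \<Longrightarrow> 0 \<le> F i u" "\<And>i u. i \<in> {1..n} \<Longrightarrow> 0 \<le> G i u"
  shows "0 \<le> saw_weight n F G x y"
  unfolding saw_weight_Fi using assms
  by (intro mult_nonneg_nonneg prod_nonneg) (auto simp: Fi_def indicator_def)

lemma comp_meas: "i \<in> I \<Longrightarrow> (\<lambda>w. fst w i) \<in> borel_measurable (PM I \<Otimes>\<^sub>M PM K)"
  "i \<in> K \<Longrightarrow> (\<lambda>w. snd w i) \<in> borel_measurable (PM I \<Otimes>\<^sub>M PM K)"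
  by auto

lemma upd_comp_meas:
  assumes "i \<in> K \<or> i = j"
  shows "(\<lambda>w. ((snd w)(j := s)) i) \<in> borel_measurable (PM I \<Otimes>\<^sub>M PM K)"
proof (cases "i = j")
  case True then show ?thesis by simp
next
  case False then show ?thesis using assms by simp
qed

lemma upd1_comp_meas:
  assumes "i \<in> I \<or> i = 1"
  shows "(\<lambda>w. ((fst w)(1 := t)) i) \<in> borel_measurable (PM I \<Otimes>\<^sub>M PM K)"
proof (cases "i = 1")
  case True then show ?thesis by simp
next
  case False then show ?thesis using assms by simp
qed

lemma rest_meas:
  assumes "{3..n+1} \<subseteq> X" "{2..n} \<subseteq> Y"
  shows "(\<lambda>z. (restrict (fst z) {3..n+1}, restrict (snd z) {2..n})) \<in> measurable (PM X \<Otimes>\<^sub>M PM Y) (saw_rest_space n)"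
  unfolding saw_rest_space_def
proof (rule measurable_Pair)
  show "(\<lambda>z. restrict (fst z) {3..n+1}) \<in> measurable (PM X \<Otimes>\<^sub>M PM Y) (PM {3..n+1})"
    by (rule measurable_compose[OF measurable_fst measurable_restrict_subset[OF assms(1)]])
  show "(\<lambda>z. restrict (snd z) {2..n}) \<in> measurable (PM X \<Otimes>\<^sub>M PM Y) (PM {2..n})"
    by (rule measurable_compose[OF measurable_snd measurable_restrict_subset[OF assms(2)]])
qed


lemma adm_unpack:
  assumes "sawtooth_admissible n f g" "i \<in> {1..n}"
  shows "mono_on {0..1} (f i)" "mono_on {0..1} (g i)" "\<forall>t\<in>{0..1}. f i t \<ge> 0" "\<forall>t\<in>{0..1}. g i t \<ge> 0"
    "C1_on01 (f i)" "C1_on01 (g i)"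
  using assms unfolding sawtooth_admissible_def by auto

lemma clampf_le1: assumes "mono_on {0..1} h" shows "clampf h u \<le> h 1"
  using assms unfolding clampf_def mono_on_def by auto

lemma main_part1:
  fixes f g :: "nat \<Rightarrow> real \<Rightarrow> real"
  assumes n: "n \<ge> 2" and adm: "sawtooth_admissible n f g"
    and fint: "integral {0..1} (f 1) = 1" and gint: "integral {0..1} (g 1) = 1"
    and fgA: "\<forall>t\<in>{0..1}. \<bar>f 1 t\<bar> \<le> A \<and> \<bar>g 1 t\<bar> \<le> A"
    and B: "B \<in> sets (saw_rest_space n)"
  shows "\<forall>t\<in>{0..1}. \<exists>D. (cond_dens_X1 n f g (saw_event n B) has_real_derivative D) (at t within {0..1}) \<and> \<bar>D\<bar> \<le> 512 * A^5"
proof -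
  define Fc where "Fc = fcl f"
  define Gc where "Gc = fcl g"
  define E where "E = saw_event n B"
  have n1: "n \<ge> 1" using n by simp
  have fA: "\<forall>t\<in>{0..1}. \<bar>f 1 t\<bar> \<le> A" and gA: "\<forall>t\<in>{0..1}. \<bar>g 1 t\<bar> \<le> A" using fgA by auto
  note ad = adm_unpack[OF adm]
  have Fcm: "Fc i \<in> borel_measurable borel" "Gc i \<in> borel_measurable borel" if "i \<in> {1..n}" for i
    unfolding Fc_def Gc_def fcl_def using clampf_meas[OF C1_on01_cont[OF ad(5)[OF that]]]
      clampf_meas[OF C1_on01_cont[OF ad(6)[OF that]]] by auto
  have Fcb: "0 \<le> Fc i u \<and> Fc i u \<le> f i 1" "0 \<le> Gc i u \<and> Gc i u \<le> g i 1" if "i \<in> {1..n}" for i u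
    unfolding Fc_def Gc_def fcl_def
    using clampf_nonneg[OF ad(3)[OF that]] clampf_nonneg[OF ad(4)[OF that]]
      clampf_le1[OF ad(1)[OF that]] clampf_le1[OF ad(2)[OF that]] by auto
  have F2: "Fc 2 u \<le> Fc 2 v" if "u \<le> v" for u v
    using clampf_mono[OF ad(1)[of 2]] n that unfolding Fc_def fcl_def mono_def by auto
  define Cb where "Cb = (\<Prod>i\<in>{2..n}. f i 1 * g i 1)"
  have f1g1: "0 \<le> f i 1" "0 \<le> g i 1" if "i \<in> {1..n}" for i
    using Fcb(1)[OF that, of 0] Fcb(2)[OF that, of 0] by linarith+
  have Cb: "0 \<le> Cb" unfolding Cb_def using f1g1 by (intro prod_nonneg mult_nonneg_nonneg) auto
  define U where "U z = Vw n Fc Gc (fst z) (snd z) * indicator B (restrict (fst z) {3..n+1}, restrict (snd z) {2..n})" for z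
  define W where "W t z = saw_weight n f g ((fst z)(1 := t)) (snd z) * indicator E ((fst z)(1 := t), snd z)" for t z
  define D0 where "D0 z = saw_weight n f g (fst z) (snd z) * indicator E z" for z
  have Y: "{1..n} = insert 1 {2..n}" using n by auto
  have Um: "U \<in> borel_measurable (PM {2..n+1} \<Otimes>\<^sub>M PM Y')" if "{2..n} \<subseteq> Y'" for Y'
  proof -
    have "(\<lambda>z. Vw n Fc Gc (fst z) (snd z)) \<in> borel_measurable (PM {2..n+1} \<Otimes>\<^sub>M PM Y')"
      by (rule Vw_meas) (use Fcm that in auto)
    moreover have "(\<lambda>z. indicator B (restrict (fst z) {3..n+1}, restrict (snd z) {2..n}) :: real) \<in> borel_measurable (PM {2..n+1} \<Otimes>\<^sub>M PM Y')"
      by (rule measurable_compose[OF rest_meas borel_measurable_indicator[OF B]]) (use that in auto)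
    ultimately show ?thesis unfolding U_def by measurable
  qed
  have Vnn: "0 \<le> Vw n Fc Gc x y" for x y by (rule Vw_nn) (use Fcb in auto)
  have Unn: "0 \<le> U z" for z unfolding U_def using Vnn by simp
  have Uind: "U (x, y(1 := v)) = U (x, y)" for x y v
  proof -
    have "Vw n Fc Gc x (y(1 := v)) = Vw n Fc Gc x y"
      unfolding Vw_def by (intro arg_cong2[where f="(*)"] refl prod.cong) (auto simp: Fi_def)
    then show ?thesis unfolding U_def by simp
  qed
  have Umono: "U (x(2 := b), y) \<le> U (x(2 := a), y)" if "a \<le> b" for x y a b
  proof -
    have "Vw n Fc Gc (x(2 := b)) y \<le> Vw n Fc Gc (x(2 := a)) y"
      by (rule Vw_mono[where F=Fc and G=Gc, OF n F2 _ _ that]) (use Fcb in auto)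
    then show ?thesis unfolding U_def by (simp add: mult_right_mono)
  qed
  have Ubd: "U (x, y) \<le> Cb * ((\<Prod>i\<in>{3..n+1}. indicator {0..1} (x i)) * (\<Prod>i\<in>{2..n}. indicator {0..1} (y i)))" for x y
  proof -
    have "U (x, y) \<le> Vw n Fc Gc x y" unfolding U_def using Vnn by (simp add: indicator_def)
    also have "\<dots> \<le> Cb * ((\<Prod>i\<in>{3..n+1}. indicator {0..1} (x i)) * (\<Prod>i\<in>{2..n}. indicator {0..1} (y i)))"
      unfolding Cb_def by (rule Vw_bound) (use Fcb in auto)
    finally show ?thesis .
  qed
  have sp: "((fst z)(1 := t), snd z) \<in> space (saw_base n)" if z: "z \<in> space (PM {2..n+1} \<Otimes>\<^sub>M PM {1..n})" for z t
  proof -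
    have "fst z \<in> PiE {2..n+1} (\<lambda>_. UNIV)" "snd z \<in> PiE {1..n} (\<lambda>_. UNIV)"
      using z by (auto simp: space_pair_measure space_PiM)
    moreover have "{1..n+1} = insert 1 {2..n+1}" by auto
    ultimately show ?thesis unfolding saw_base_def
      by (auto simp: space_pair_measure space_PiM intro!: PiE_fun_upd)
  qed
  have hW: "W t z = Kf (f 1) (g 1) t (fst z 2) (snd z 1) * U z"
    if z: "z \<in> space (PM {2..n+1} \<Otimes>\<^sub>M PM {1..n})" for t z
  proof -
    have "saw_weight n f g ((fst z)(1 := t)) (snd z) = saw_weight n Fc Gc ((fst z)(1 := t)) (snd z)"
      unfolding Fc_def Gc_def by (rule saw_weight_clamp)
    also have "\<dots> = Kf (Fc 1) (Gc 1) t (fst z 2) (snd z 1) * Vw n Fc Gc (fst z) (snd z)"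
      by (rule saw_weight_factor[OF n1])
    also have "Kf (Fc 1) (Gc 1) t (fst z 2) (snd z 1) = Kf (f 1) (g 1) t (fst z 2) (snd z 1)"
      unfolding Fc_def Gc_def fcl_def by (rule Kf_clamp[symmetric])
    finally have a: "saw_weight n f g ((fst z)(1 := t)) (snd z) = Kf (f 1) (g 1) t (fst z 2) (snd z 1) * Vw n Fc Gc (fst z) (snd z)" .
    have b: "indicator E ((fst z)(1 := t), snd z) = (indicator B (restrict (fst z) {3..n+1}, restrict (snd z) {2..n}) :: real)"
      using sp[OF z, of t] unfolding E_def saw_event_def saw_rest_def by (simp add: indicator_def)
    show ?thesis unfolding W_def U_def a b by (simp add: mult_ac)
  qed
  have hD: "D0 ((fst z)(1 := t), snd z) = W t z" for t z unfolding D0_def W_def by simp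
  have D0c: "D0 z = saw_weight n Fc Gc (fst z) (snd z) * indicator E z" for z
    unfolding D0_def Fc_def Gc_def using saw_weight_clamp by metis
  have Esets: "E \<in> sets (PM {1..n+1} \<Otimes>\<^sub>M PM {1..n})"
  proof -
    have "(\<lambda>z. (restrict (fst z) {3..n+1}, restrict (snd z) {2..n})) -` B \<inter> space (PM {1..n+1} \<Otimes>\<^sub>M PM {1..n})
        \<in> sets (PM {1..n+1} \<Otimes>\<^sub>M PM {1..n})"
      by (rule measurable_sets[OF rest_meas B]) auto
    moreover have "E = (\<lambda>z. (restrict (fst z) {3..n+1}, restrict (snd z) {2..n})) -` B \<inter> space (PM {1..n+1} \<Otimes>\<^sub>M PM {1..n})"
      unfolding E_def saw_event_def saw_rest_def saw_base_def by auto
    ultimately show ?thesis by simp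
  qed
  have D0m: "D0 \<in> borel_measurable (PM {1..n+1} \<Otimes>\<^sub>M PM {1..n})"
  proof -
    have "(\<lambda>z. saw_weight n Fc Gc (fst z) (snd z)) \<in> borel_measurable (PM {1..n+1} \<Otimes>\<^sub>M PM {1..n})"
      by (rule sw_meas) (use Fcm in auto)
    then show ?thesis unfolding D0c using Esets by measurable
  qed
  have D0nn: "0 \<le> D0 z" for z
    unfolding D0c using sw_nn[of n Fc Gc] Fcb by (auto intro!: mult_nonneg_nonneg)
  have A: "\<forall>t\<in>{0..1}. \<exists>D. ((\<lambda>t. (LINT z|(PM {2..n+1} \<Otimes>\<^sub>M PM {1..n}). W t z) / (LINT z|(PM {1..n+1} \<Otimes>\<^sub>M PM {1..n}). D0 z))
           has_real_derivative D) (at t within {0..1}) \<and> \<bar>D\<bar> \<le> 512 * A^5"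
    by (rule assemble[OF n _ _ Y hW hD D0m D0nn Um[of "{1..n}"] Um[of "{2..n}"] Uind Unn Umono Ubd Cb
          ad(1,2,3,4,5,6)[of 1] fint gint fA gA]) (use n in auto)
  have eq: "cond_dens_X1 n f g E = (\<lambda>t. (LINT z|(PM {2..n+1} \<Otimes>\<^sub>M PM {1..n}). W t z) / (LINT z|(PM {1..n+1} \<Otimes>\<^sub>M PM {1..n}). D0 z))"
    by (rule ext) (simp add: cond_dens_X1_def saw_base_def W_def D0_def)
  show ?thesis using A unfolding eq[unfolded E_def] .
qed

lemma main_part2:
  fixes f g :: "nat \<Rightarrow> real \<Rightarrow> real"
  assumes n: "n \<ge> 2" and adm: "sawtooth_admissible n f g"
    and fint: "integral {0..1} (f 1) = 1" and gint: "integral {0..1} (g 1) = 1"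
    and fgA: "\<forall>t\<in>{0..1}. \<bar>f 1 t\<bar> \<le> A \<and> \<bar>g 1 t\<bar> \<le> A"
  shows "\<forall>t\<in>{0..1}. \<exists>D. (cond_dens_X1_Y2 n f g s has_real_derivative D) (at t within {0..1}) \<and> \<bar>D\<bar> \<le> 512 * A^5"
proof -
  define Fc where "Fc = fcl f"
  define Gc where "Gc = fcl g"
  have n1: "n \<ge> 1" using n by simp
  have fA: "\<forall>t\<in>{0..1}. \<bar>f 1 t\<bar> \<le> A" and gA: "\<forall>t\<in>{0..1}. \<bar>g 1 t\<bar> \<le> A" using fgA by auto
  note ad = adm_unpack[OF adm]
  have Fcm: "Fc i \<in> borel_measurable borel" "Gc i \<in> borel_measurable borel" if "i \<in> {1..n}" for i
    unfolding Fc_def Gc_def fcl_def using clampf_meas[OF C1_on01_cont[OF ad(5)[OF that]]]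
      clampf_meas[OF C1_on01_cont[OF ad(6)[OF that]]] by auto
  have Fcb: "0 \<le> Fc i u \<and> Fc i u \<le> f i 1" "0 \<le> Gc i u \<and> Gc i u \<le> g i 1" if "i \<in> {1..n}" for i u
    unfolding Fc_def Gc_def fcl_def
    using clampf_nonneg[OF ad(3)[OF that]] clampf_nonneg[OF ad(4)[OF that]]
      clampf_le1[OF ad(1)[OF that]] clampf_le1[OF ad(2)[OF that]] by auto
  have F2: "Fc 2 u \<le> Fc 2 v" if "u \<le> v" for u v
    using clampf_mono[OF ad(1)[of 2]] n that unfolding Fc_def fcl_def mono_def by auto
  define Cb where "Cb = (\<Prod>i\<in>{2..n}. f i 1 * g i 1)"
  have f1g1: "0 \<le> f i 1" "0 \<le> g i 1" if "i \<in> {1..n}" for i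
    using Fcb(1)[OF that, of 0] Fcb(2)[OF that, of 0] by linarith+
  have Cb: "0 \<le> Cb" unfolding Cb_def using f1g1 by (intro prod_nonneg mult_nonneg_nonneg) auto
  define U where "U z = Vw n Fc Gc (fst z) ((snd z)(2 := s))" for z
  define W where "W t z = saw_weight n f g ((fst z)(1 := t)) ((snd z)(2 := s))" for t z
  define D0 where "D0 z = saw_weight n f g (fst z) ((snd z)(2 := s))" for z
  have Y: "{1..n} - {2} = insert 1 {3..n}" using n by auto
  have Um: "U \<in> borel_measurable (PM {2..n+1} \<Otimes>\<^sub>M PM Y')" if "{3..n} \<subseteq> Y'" for Y'
    unfolding U_def
  proof (rule Vw_meas)
    fix i assume i: "i \<in> {2..n}"
    then have "i \<in> Y' \<or> i = 2" using that by auto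
    then show "(\<lambda>w. ((snd w)(2 := s)) i) \<in> borel_measurable (PM {2..n+1} \<Otimes>\<^sub>M PM Y')"
      by (rule upd_comp_meas)
  qed (use Fcm in auto)
  have Vnn: "0 \<le> Vw n Fc Gc x y" for x y by (rule Vw_nn) (use Fcb in auto)
  have Unn: "0 \<le> U z" for z unfolding U_def using Vnn by simp
  have Uind: "U (x, y(1 := v)) = U (x, y)" for x y v
    unfolding U_def Vw_def by (intro arg_cong2[where f="(*)"] refl prod.cong) (auto simp: Fi_def)
  have Umono: "U (x(2 := b), y) \<le> U (x(2 := a), y)" if "a \<le> b" for x y a b
    unfolding U_def by simp (rule Vw_mono[where F=Fc and G=Gc, OF n F2 _ _ that], use Fcb in auto)
  have Ubd: "U (x, y) \<le> Cb * ((\<Prod>i\<in>{3..n+1}. indicator {0..1} (x i)) * (\<Prod>i\<in>{3..n}. indicator {0..1} (y i)))" for x y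
  proof -
    have "U (x, y) \<le> Cb * ((\<Prod>i\<in>{3..n+1}. indicator {0..1} (x i)) * (\<Prod>i\<in>{2..n}. indicator {0..1} ((y(2 := s)) i)))"
      unfolding U_def Cb_def fst_conv snd_conv by (rule Vw_bound) (use Fcb in auto)
    also have "(\<Prod>i\<in>{2..n}. indicator {0..1} ((y(2 := s)) i)) \<le> (\<Prod>i\<in>{3..n}. indicator {0..1} (y i) :: real)"
    proof -
      have ins: "{2..n} = insert 2 {3..n}" using n by auto
      have "(\<Prod>i\<in>{2..n}. indicator {0..1} ((y(2 := s)) i)) = indicator {0..1} s * (\<Prod>i\<in>{3..n}. indicator {0..1} ((y(2 := s)) i) :: real)"
        unfolding ins by (subst prod.insert) auto
      also have "(\<Prod>i\<in>{3..n}. indicator {0..1} ((y(2 := s)) i)) = (\<Prod>i\<in>{3..n}. indicator {0..1} (y i) :: real)"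
        by (rule prod.cong) auto
      finally show ?thesis
        by (simp add: indicator_def prod_nonneg)
    qed
    then have "Cb * ((\<Prod>i\<in>{3..n+1}. indicator {0..1} (x i)) * (\<Prod>i\<in>{2..n}. indicator {0..1} ((y(2 := s)) i)))
        \<le> Cb * ((\<Prod>i\<in>{3..n+1}. indicator {0..1} (x i)) * (\<Prod>i\<in>{3..n}. indicator {0..1} (y i)))"
      using Cb by (intro mult_left_mono prod_nonneg) auto
    finally show ?thesis .
  qed
  have hW: "W t z = Kf (f 1) (g 1) t (fst z 2) (snd z 1) * U z" for t z
  proof -
    have "saw_weight n f g ((fst z)(1 := t)) ((snd z)(2 := s)) = saw_weight n Fc Gc ((fst z)(1 := t)) ((snd z)(2 := s))"
      unfolding Fc_def Gc_def by (rule saw_weight_clamp)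
    also have "\<dots> = Kf (Fc 1) (Gc 1) t (fst z 2) (((snd z)(2 := s)) 1) * Vw n Fc Gc (fst z) ((snd z)(2 := s))"
      by (rule saw_weight_factor[OF n1])
    also have "Kf (Fc 1) (Gc 1) t (fst z 2) (((snd z)(2 := s)) 1) = Kf (f 1) (g 1) t (fst z 2) (snd z 1)"
      unfolding Fc_def Gc_def fcl_def by (simp add: Kf_clamp[symmetric])
    finally show ?thesis unfolding W_def U_def .
  qed
  have hD: "D0 ((fst z)(1 := t), snd z) = W t z" for t z unfolding D0_def W_def by simp
  have D0c: "D0 z = saw_weight n Fc Gc (fst z) ((snd z)(2 := s))" for z
    unfolding D0_def Fc_def Gc_def using saw_weight_clamp by metis
  have D0m: "D0 \<in> borel_measurable (PM {1..n+1} \<Otimes>\<^sub>M PM ({1..n} - {2}))"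
  proof -
    have "(\<lambda>z. saw_weight n Fc Gc (fst z) ((snd z)(2 := s))) \<in> borel_measurable (PM {1..n+1} \<Otimes>\<^sub>M PM ({1..n} - {2}))"
    proof (rule sw_meas)
      fix i assume i: "i \<in> {1..n}"
      then have "i \<in> {1..n} - {2} \<or> i = 2" by auto
      then show "(\<lambda>w. ((snd w)(2 := s)) i) \<in> borel_measurable (PM {1..n+1} \<Otimes>\<^sub>M PM ({1..n} - {2}))"
        by (rule upd_comp_meas)
    qed (use Fcm in auto)
    then show ?thesis unfolding D0c .
  qed
  have D0nn: "0 \<le> D0 z" for z
    unfolding D0c using sw_nn[of n Fc Gc] Fcb by auto
  have A: "\<forall>t\<in>{0..1}. \<exists>D. ((\<lambda>t. (LINT z|(PM {2..n+1} \<Otimes>\<^sub>M PM ({1..n} - {2})). W t z) / (LINT z|(PM {1..n+1} \<Otimes>\<^sub>M PM ({1..n} - {2})). D0 z))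
           has_real_derivative D) (at t within {0..1}) \<and> \<bar>D\<bar> \<le> 512 * A^5"
    by (rule assemble[OF n _ _ Y hW hD D0m D0nn Um[of "{1..n} - {2}"] Um[of "{3..n}"] Uind Unn Umono Ubd Cb
          ad(1,2,3,4,5,6)[of 1] fint gint fA gA]) (use n in auto)
  have eq: "cond_dens_X1_Y2 n f g s = (\<lambda>t. (LINT z|(PM {2..n+1} \<Otimes>\<^sub>M PM ({1..n} - {2})). W t z) / (LINT z|(PM {1..n+1} \<Otimes>\<^sub>M PM ({1..n} - {2})). D0 z))"
    by (rule ext) (simp add: cond_dens_X1_Y2_def W_def D0_def)
  show ?thesis using A unfolding eq .
qed

theorem mainTheorem11:
  fixes A :: real
  assumes "A > 0"
  shows "\<exists>R::real. \<forall>(n::nat) (f::nat \<Rightarrow> real \<Rightarrow> real) (g::nat \<Rightarrow> real \<Rightarrow> real).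
     n \<ge> 2 \<and> sawtooth_admissible n f g
     \<and> integral {0..1} (f 1) = 1 \<and> integral {0..1} (g 1) = 1
     \<and> (\<forall>t\<in>{0..1}. \<bar>f 1 t\<bar> \<le> A \<and> \<bar>g 1 t\<bar> \<le> A)
     \<longrightarrow>
       (\<forall>B \<in> sets (saw_rest_space n).
          measure (saw_prob n f g) (saw_event n B) > 0 \<longrightarrow>
          (\<forall>t\<in>{0..1}. \<exists>D. (cond_dens_X1 n f g (saw_event n B) has_real_derivative D)
                              (at t within {0..1}) \<and> \<bar>D\<bar> \<le> R))
     \<and> (\<forall>s\<in>{0<..1}.
          (\<forall>t\<in>{0..1}. \<exists>D. (cond_dens_X1_Y2 n f g s has_real_derivative D)
                              (at t within {0..1}) \<and> \<bar>D\<bar> \<le> R))"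
proof (intro exI[of _ "512 * A^5"] allI impI, goal_cases)
  case (1 n f g)
  then have n: "n \<ge> 2" and adm: "sawtooth_admissible n f g" and fint: "integral {0..1} (f 1) = 1"
    and gint: "integral {0..1} (g 1) = 1" and fgA: "\<forall>t\<in>{0..1}. \<bar>f 1 t\<bar> \<le> A \<and> \<bar>g 1 t\<bar> \<le> A"
    by auto
  have P1: "\<forall>t\<in>{0..1}. \<exists>D. (cond_dens_X1 n f g (saw_event n B) has_real_derivative D) (at t within {0..1}) \<and> \<bar>D\<bar> \<le> 512 * A^5"
    if "B \<in> sets (saw_rest_space n)" for B
    by (rule main_part1[OF n adm fint gint fgA that])
  have P2: "\<forall>t\<in>{0..1}. \<exists>D. (cond_dens_X1_Y2 n f g s has_real_derivative D) (at t within {0..1}) \<and> \<bar>D\<bar> \<le> 512 * A^5"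
    for s
    by (rule main_part2[OF n adm fint gint fgA])
  show ?case using P1 P2 by blast
qed


end
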